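(* Fix $r\ge 2$ and let $z_m$, $z_m^{(j)}$ be as in the context. When $\frac{r^2}{r+1}\operatorname{Res}(Q^{(r+1)/r})$ is written as a polynomial in the variables $z_m^{(j)}$ ($0\le m\le r-2$, $j\ge 0$), it has the form $$\frac{r^2}{r+1}\operatorname{Res}(Q^{(r+1)/r})=\frac{1}{2}\sum_{j=0}^{r-2}z_jz_{r-2-j}+W_r(z),$$ where every monomial of $W_r(z)$ contains at least one factor $z_m^{(j)}$ with $j\ge 1$.
   Context: Let $R$ be the differential algebra over $\mathbb C$ of polynomials in formal variables $\gamma_0,\dots,\gamma_{r-2}$ and all their $x$-derivatives, with derivation $\partial=\partial/\partial x$. Put $D=\frac{\sqrt{-1}}{\sqrt r}\partial$. Formal pseudodifferential operators are sums $\sum_{i\le N}a_iD^i$ with $a_i\in R$, multiplied using $D^k\cdot f=\sum_{j\ge0}\binom{k}{j}(D^jf)D^{k-j}$ for $k\in\mathbb Z$ (with $\binom{-a-1}{b}=(-1)^b\binom{a+b}{b}$). Let $Q=D^r+\sum_{i=0}^{r-2}\gamma_iD^i$. There is a unique $Q^{1/r}=D+\sum_{i\ge1}w_{-i}D^{-i}$ with $(Q^{1/r})^r=Q$; set $Q^{k/r}=(Q^{1/r})^k$, and let $\operatorname{Res}$ denote the coefficient of $D^{-1}$. For $0\le m\le r-2$ put $z_m=-\frac{r}{m+1}\operatorname{Res}(Q^{(m+1)/r})$ and $z_m^{(j)}=\partial^jz_m$. Each $\gamma_i$ is a differential polynomial in $z_0,\dots,z_{r-2}$, and the $z_m^{(j)}$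 are algebraically independent generators of $R$, so each element of $R$ is uniquely a polynomial in the $z_m^{(j)}$. $W_r(z)$ is defined as $\frac{r^2}{r+1}\operatorname{Res}(Q^{(r+1)/r})-\frac12\sum_{j=0}^{r-2}z_jz_{r-2-j}$ written in the $z_m^{(j)}$. *)

theory Defs
  imports Complex_Main "HOL-Library.Poly_Mapping"
begin

text \<open>Monomials in variables indexed by pairs (i,k); the pair (i,k) stands for the
k-th x-derivative of the i-th generator. Polynomials with complex coefficients.\<close>
type_synonym mono = "(nat \<times> nat) \<Rightarrow>\<^sub>0 nat"
type_synonym dpoly = "mono \<Rightarrow>\<^sub>0 complex"

definition var :: "nat \<times> nat \<Rightarrow> dpoly" where
  "var v = Poly_Mapping.single (Poly_Mapping.single v 1) 1"

definition cst :: "complex \<Rightarrow> dpoly" where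
  "cst c = Poly_Mapping.single 0 c"

text \<open>The derivation d/dx on R: it sends gamma_i^(k) to gamma_i^(k+1), extended by Leibniz.\<close>
definition shiftmono :: "mono \<Rightarrow> nat \<times> nat \<Rightarrow> mono" where
  "shiftmono m v = m - Poly_Mapping.single v 1 + Poly_Mapping.single (fst v, Suc (snd v)) 1"

definition dd :: "dpoly \<Rightarrow> dpoly" where
  "dd p = (\<Sum>m\<in>Poly_Mapping.keys p. \<Sum>v\<in>Poly_Mapping.keys m.
      Poly_Mapping.single (shiftmono m v) (Poly_Mapping.lookup p m * of_nat (Poly_Mapping.lookup m v)))"

definition peval :: "(nat \<times> nat \<Rightarrow> dpoly) \<Rightarrow> dpoly \<Rightarrow> dpoly" where
  "peval f P = (\<Sum>mo\<in>Poly_Mapping.keys P. cst (Poly_Mapping.lookup P mo) * (\<Prod>v\<in>Poly_Mapping.keys mo. f v ^ Poly_Mapping.lookup mo v))"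

text \<open>Pseudodifferential operators: coefficient functions int => R (coefficient of D^n);
only those with support bounded above are used.\<close>
type_synonym psdo = "int \<Rightarrow> dpoly"

definition cD :: "nat \<Rightarrow> complex" where
  "cD r = \<i> / complex_of_real (sqrt (real r))"

definition Dapp :: "nat \<Rightarrow> nat \<Rightarrow> dpoly \<Rightarrow> dpoly" where
  "Dapp r j b = cst (cD r ^ j) * (dd ^^ j) b"

text \<open>Product: (a D^i)(b D^k) = sum_j binom(i,j) a (D^j b) D^(i+k-j).\<close>
definition pmul :: "nat \<Rightarrow> psdo \<Rightarrow> psdo \<Rightarrow> psdo" where
  "pmul r A B = (\<lambda>n. \<Sum>(i, k)\<in>{(i, k). n \<le> i + k \<and> A i \<noteq> 0 \<and> B k \<noteq> 0}.
      cst ((of_int i :: complex) gchoose nat (i + k - n)) * A i * Dapp r (nat (i + k - n)) (B k))"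

definition pone :: psdo where
  "pone = (\<lambda>n. if n = 0 then 1 else 0)"

primrec ppow :: "nat \<Rightarrow> psdo \<Rightarrow> nat \<Rightarrow> psdo" where
  "ppow r A 0 = pone"
| "ppow r A (Suc n) = pmul r (ppow r A n) A"

text \<open>Q = D^r + sum_{i=0}^{r-2} gamma_i D^i, with gamma_i = var (i,0).\<close>
definition Qop :: "nat \<Rightarrow> psdo" where
  "Qop r = (\<lambda>n. if n = int r then 1
               else if 0 \<le> n \<and> n \<le> int r - 2 then var (nat n, 0) else 0)"

definition is_Qroot :: "nat \<Rightarrow> psdo \<Rightarrow> bool" where
  "is_Qroot r L \<longleftrightarrow> L 1 = 1 \<and> L 0 = 0 \<and> (\<forall>n>1. L n = 0) \<and> ppow r L r = Qop r"

definition Qroot :: "nat \<Rightarrow> psdo" where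
  "Qroot r = (THE L. is_Qroot r L)"

text \<open>Res(Q^{k/r}) = coefficient of D^(-1) in (Q^{1/r})^k.\<close>
definition ResQ :: "nat \<Rightarrow> nat \<Rightarrow> dpoly" where
  "ResQ r k = ppow r (Qroot r) k (-1)"

definition zz :: "nat \<Rightarrow> nat \<Rightarrow> dpoly" where
  "zz r m = cst (- of_nat r / of_nat (m + 1)) * ResQ r (m + 1)"

definition zvar :: "nat \<Rightarrow> nat \<times> nat \<Rightarrow> dpoly" where
  "zvar r v = (dd ^^ snd v) (zz r (fst v))"

end

theory Submission
  imports Defs "HOL-Computational_Algebra.Formal_Laurent_Series"
begin

section \<open>Basic dpoly algebra\<close>

lemma cst_add: "cst (a + b) = cst a + cst b"
  by (simp add: cst_def single_add)
lemma cst_mult: "cst (a * b) = cst a * cst b"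
  by (simp add: cst_def mult_single)
lemma cst_0[simp]: "cst 0 = 0" by (simp add: cst_def)
lemma cst_1[simp]: "cst 1 = 1" by (simp add: cst_def)
lemma cst_of_nat: "cst (of_nat n) = of_nat n" by (simp add: cst_def)
lemma cst_minus: "cst (- a) = - cst a" by (simp add: cst_def single_uminus)
lemma cst_diff: "cst (a - b) = cst a - cst b" by (simp add: cst_def single_diff)
lemma cst_power: "cst (a ^ n) = cst a ^ n"
  by (induct n) (simp_all add: cst_mult)

lemma update_as_add:
  "a \<notin> Poly_Mapping.keys f \<Longrightarrow> Poly_Mapping.update a b f = f + Poly_Mapping.single a b"
  by (rule poly_mapping_eqI) (auto simp: lookup_update lookup_add lookup_single in_keys_iff when_def)

lemma pm_induct:
  assumes "P 0" and "\<And>p m c. P p \<Longrightarrow> P (p + Poly_Mapping.single m c)"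
  shows "P (q :: ('a \<Rightarrow>\<^sub>0 'b::monoid_add))"
proof (induct q rule: update_induct)
  case const then show ?case using assms by simp
next
  case (update f a b) then show ?case using assms(2) by (simp add: update_as_add)
qed

lemma lookup_add_nat_keys:
  "Poly_Mapping.keys (m + n :: 'a \<Rightarrow>\<^sub>0 nat) = Poly_Mapping.keys m \<union> Poly_Mapping.keys n"
  by (auto simp: in_keys_iff lookup_add)

definition mprod :: "(nat \<times> nat \<Rightarrow> dpoly) \<Rightarrow> mono \<Rightarrow> dpoly" where
  "mprod f mo = (\<Prod>v\<in>Poly_Mapping.keys mo. f v ^ Poly_Mapping.lookup mo v)"

lemma mprod_superset:
  assumes "finite K" "Poly_Mapping.keys mo \<subseteq> K"
  shows "mprod f mo = (\<Prod>v\<in>K. f v ^ Poly_Mapping.lookup mo v)"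
  unfolding mprod_def
  by (rule prod.mono_neutral_left) (use assms in \<open>auto simp: in_keys_iff\<close>)

lemma mprod_add: "mprod f (m + n) = mprod f m * mprod f n"
proof -
  let ?K = "Poly_Mapping.keys m \<union> Poly_Mapping.keys n"
  have "mprod f (m + n) = (\<Prod>v\<in>?K. f v ^ Poly_Mapping.lookup (m+n) v)"
    by (rule mprod_superset) (auto simp: lookup_add_nat_keys)
  also have "\<dots> = (\<Prod>v\<in>?K. f v ^ Poly_Mapping.lookup m v) * (\<Prod>v\<in>?K. f v ^ Poly_Mapping.lookup n v)"
    by (simp add: lookup_add power_add prod.distrib)
  also have "\<dots> = mprod f m * mprod f n"
    by (subst (1 2) mprod_superset[where K="?K"]) auto
  finally show ?thesis .
qed

lemma mprod_0[simp]: "mprod f 0 = 1" by (simp add: mprod_def)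

lemma peval_alt: "peval f P = (\<Sum>mo\<in>Poly_Mapping.keys P. cst (Poly_Mapping.lookup P mo) * mprod f mo)"
  by (simp add: peval_def mprod_def)

lemma peval_0[simp]: "peval f 0 = 0" by (simp add: peval_def)

lemma peval_add: "peval f (p + q) = peval f p + peval f q"
  unfolding peval_alt
  by (rule setsum_keys_plus_distrib) (simp_all add: cst_add distrib_right)

lemma peval_single: "peval f (Poly_Mapping.single m c) = cst c * mprod f m"
  by (simp add: peval_alt)

lemma peval_mult: "peval f (p * q) = peval f p * peval f q"
proof (induct p rule: pm_induct)
  case 1 then show ?case by simp
next
  case (2 p m c)
  have "peval f (Poly_Mapping.single m c * q) = peval f (Poly_Mapping.single m c) * peval f q"
  proof (induct q rule: pm_induct)
    case 1 then show ?case by simp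
  next
    case (2 q n d)
    then show ?case
      by (simp add: distrib_left peval_add mult_single peval_single mprod_add cst_mult mult_ac)
  qed
  then show ?case using 2 by (simp add: distrib_right peval_add)
qed

lemma peval_cst[simp]: "peval f (cst c) = cst c"
  by (simp add: cst_def peval_single)

lemma peval_one[simp]: "peval f 1 = 1"
  using peval_cst[of f 1] by simp

lemma peval_var[simp]: "peval f (var v) = f v"
  by (simp add: var_def peval_single mprod_def)

lemma peval_uminus: "peval f (- p) = - peval f p"
  using peval_add[of f p "-p"] by (simp add: minus_unique)

lemma peval_diff: "peval f (p - q) = peval f p - peval f q"
  using peval_add[of f p "-q"] by (simp add: peval_uminus)

lemma peval_sum: "peval f (sum g A) = (\<Sum>a\<in>A. peval f (g a))"
  by (induct A rule: infinite_finite_induct) (simp_all add: peval_add)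

lemma peval_power: "peval f (p ^ n) = peval f p ^ n"
  by (induct n) (simp_all add: peval_mult)

lemma peval_of_nat[simp]: "peval f (of_nat n) = of_nat n"
  using peval_cst[of f "of_nat n"] by (simp add: cst_of_nat)

definition hd :: "mono \<Rightarrow> complex \<Rightarrow> dpoly" where
  "hd m c = (\<Sum>v\<in>Poly_Mapping.keys m. Poly_Mapping.single (shiftmono m v) (c * of_nat (Poly_Mapping.lookup m v)))"

lemma dd_alt: "dd p = (\<Sum>m\<in>Poly_Mapping.keys p. hd m (Poly_Mapping.lookup p m))"
  by (simp add: dd_def hd_def)

lemma dd_0[simp]: "dd 0 = 0" by (simp add: dd_def)

lemma dd_add: "dd (p + q) = dd p + dd q"
  unfolding dd_alt
  by (rule setsum_keys_plus_distrib) (simp_all add: hd_def distrib_right single_add sum.distrib)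

lemma dd_single: "dd (Poly_Mapping.single m c) = hd m c"
  by (simp add: dd_alt hd_def)

lemma hd_superset:
  assumes "finite K" "Poly_Mapping.keys m \<subseteq> K"
  shows "hd m c = (\<Sum>v\<in>K. Poly_Mapping.single (shiftmono m v) (c * of_nat (Poly_Mapping.lookup m v)))"
  unfolding hd_def
  by (rule sum.mono_neutral_left) (use assms in \<open>auto simp: in_keys_iff\<close>)

lemma shiftmono_add:
  assumes "Poly_Mapping.lookup m v \<ge> 1"
  shows "shiftmono (m + n) v = shiftmono m v + n"
  unfolding shiftmono_def
  by (rule poly_mapping_eqI) (use assms in \<open>auto simp: lookup_add lookup_minus lookup_single when_def\<close>)

lemma hd_add: "hd (m + n) (a * b) = hd m a * Poly_Mapping.single n b + Poly_Mapping.single m a * hd n b"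
proof -
  let ?K = "Poly_Mapping.keys m \<union> Poly_Mapping.keys n"
  have "hd (m + n) (a * b) = (\<Sum>v\<in>?K. Poly_Mapping.single (shiftmono (m+n) v) (a * b * of_nat (Poly_Mapping.lookup (m+n) v)))"
    by (rule hd_superset) (auto simp: lookup_add_nat_keys)
  also have "\<dots> = (\<Sum>v\<in>?K. Poly_Mapping.single (shiftmono (m+n) v) (a * of_nat (Poly_Mapping.lookup m v) * b))
      + (\<Sum>v\<in>?K. Poly_Mapping.single (shiftmono (m+n) v) (a * (b * of_nat (Poly_Mapping.lookup n v))))"
    unfolding sum.distrib[symmetric]
  proof (rule sum.cong[OF refl])
    fix v
    have "a * b * of_nat (Poly_Mapping.lookup (m+n) v) = a * of_nat (Poly_Mapping.lookup m v) * b + a * (b * of_nat (Poly_Mapping.lookup n v))"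
      by (simp add: lookup_add distrib_left distrib_right mult_ac)
    then show "Poly_Mapping.single (shiftmono (m+n) v) (a * b * of_nat (Poly_Mapping.lookup (m+n) v)) =
      Poly_Mapping.single (shiftmono (m+n) v) (a * of_nat (Poly_Mapping.lookup m v) * b) + Poly_Mapping.single (shiftmono (m+n) v) (a * (b * of_nat (Poly_Mapping.lookup n v)))"
      by (simp add: single_add)
  qed
  also have "(\<Sum>v\<in>?K. Poly_Mapping.single (shiftmono (m+n) v) (a * of_nat (Poly_Mapping.lookup m v) * b))
     = (\<Sum>v\<in>?K. Poly_Mapping.single (shiftmono m v + n) (a * of_nat (Poly_Mapping.lookup m v) * b))"
  proof (rule sum.cong[OF refl])
    fix v
    show "Poly_Mapping.single (shiftmono (m+n) v) (a * of_nat (Poly_Mapping.lookup m v) * b) =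
      Poly_Mapping.single (shiftmono m v + n) (a * of_nat (Poly_Mapping.lookup m v) * b)"
    proof (cases "Poly_Mapping.lookup m v = 0")
      case False then show ?thesis using shiftmono_add[of m v n] by simp
    qed simp
  qed
  also have "\<dots> = hd m a * Poly_Mapping.single n b"
    by (subst hd_superset[where K="?K"]) (auto simp: sum_distrib_right mult_single)
  also have "(\<Sum>v\<in>?K. Poly_Mapping.single (shiftmono (m+n) v) (a * (b * of_nat (Poly_Mapping.lookup n v))))
     = (\<Sum>v\<in>?K. Poly_Mapping.single (m + shiftmono n v) (a * (b * of_nat (Poly_Mapping.lookup n v))))"
  proof (rule sum.cong[OF refl])
    fix v
    show "Poly_Mapping.single (shiftmono (m+n) v) (a * (b * of_nat (Poly_Mapping.lookup n v))) =
      Poly_Mapping.single (m + shiftmono n v) (a * (b * of_nat (Poly_Mapping.lookup n v)))"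
    proof (cases "Poly_Mapping.lookup n v = 0")
      case False
      then have "shiftmono (n+m) v = shiftmono n v + m" using shiftmono_add[of n v m] by simp
      then have "shiftmono (m+n) v = m + shiftmono n v" by (simp add: add.commute)
      then show ?thesis by simp
    qed simp
  qed
  also have "\<dots> = Poly_Mapping.single m a * hd n b"
    by (subst hd_superset[where K="?K"]) (auto simp: sum_distrib_left mult_single)
  finally show ?thesis .
qed

lemma dd_mult: "dd (p * q) = dd p * q + p * dd q"
proof (induct p rule: pm_induct)
  case 1 then show ?case by simp
next
  case (2 p m c)
  have "dd (Poly_Mapping.single m c * q) = dd (Poly_Mapping.single m c) * q + Poly_Mapping.single m c * dd q"
  proof (induct q rule: pm_induct)
    case 1 then show ?case by simp
  next
    case (2 q n d)
    then show ?case
      by (simp add: distrib_left distrib_right dd_add mult_single dd_single hd_add)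
  qed
  then show ?case using 2 by (simp add: distrib_right dd_add)
qed

lemma dd_cst[simp]: "dd (cst c) = 0"
  by (simp add: cst_def dd_single hd_def)

lemma dd_one[simp]: "dd 1 = 0"
  using dd_cst[of 1] by simp

lemma dd_of_nat[simp]: "dd (of_nat n) = 0"
  using dd_cst[of "of_nat n"] by (simp add: cst_of_nat)

lemma dd_var: "dd (var (i, k)) = var (i, Suc k)"
proof -
  have "shiftmono (Poly_Mapping.single (i, k) 1) (i, k) = Poly_Mapping.single (i, Suc k) 1"
    unfolding shiftmono_def by simp
  then show ?thesis by (simp add: var_def dd_single hd_def)
qed

lemma dd_uminus: "dd (- p) = - dd p"
  using dd_add[of p "-p"] by (simp add: minus_unique)

lemma dd_diff: "dd (p - q) = dd p - dd q"
  using dd_add[of p "-q"] by (simp add: dd_uminus)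

lemma dd_sum: "dd (sum g A) = (\<Sum>a\<in>A. dd (g a))"
  by (induct A rule: infinite_finite_induct) (simp_all add: dd_add)

lemma dd_cst_mult: "dd (cst c * p) = cst c * dd p"
  by (simp add: dd_mult)

lemma ddpow_add: "(dd ^^ j) (p + q) = (dd ^^ j) p + (dd ^^ j) q"
  by (induct j) (simp_all add: dd_add)

lemma ddpow_0[simp]: "(dd ^^ j) 0 = 0"
  by (induct j) simp_all

lemma ddpow_cst_mult: "(dd ^^ j) (cst c * p) = cst c * (dd ^^ j) p"
  by (induct j) (simp_all add: dd_cst_mult)

lemma ddpow_sum: "(dd ^^ j) (sum g A) = (\<Sum>a\<in>A. (dd ^^ j) (g a))"
  by (induct A rule: infinite_finite_induct) (simp_all add: ddpow_add)


section \<open>Pseudodifferential operators\<close>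

definition bnd :: "psdo \<Rightarrow> int \<Rightarrow> bool" where
  "bnd A a \<longleftrightarrow> (\<forall>i>a. A i = 0)"

lemma Dapp_0[simp]: "Dapp r 0 b = b" by (simp add: Dapp_def)
lemma Dapp_zero[simp]: "Dapp r j 0 = 0" by (simp add: Dapp_def)
lemma Dapp_cst: "j > 0 \<Longrightarrow> Dapp r j (cst c) = 0"
  by (cases j) (simp_all add: Dapp_def funpow_Suc_right del: funpow.simps)
lemma Dapp_one: "j > 0 \<Longrightarrow> Dapp r j 1 = 0"
  using Dapp_cst[of j r 1] by simp

lemma pmul_fin:
  assumes A: "bnd A a" and B: "bnd B b"
  shows "pmul r A B n = (\<Sum>i\<in>{n-b..a}. \<Sum>k\<in>{n-i..b}.
            cst ((of_int i :: complex) gchoose nat (i+k-n)) * A i * Dapp r (nat (i+k-n)) (B k))"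
proof -
  let ?f = "\<lambda>(i,k). cst ((of_int i :: complex) gchoose nat (i+k-n)) * A i * Dapp r (nat (i+k-n)) (B k)"
  have "pmul r A B n = sum ?f {(i, k). n \<le> i + k \<and> A i \<noteq> 0 \<and> B k \<noteq> 0}"
    by (simp add: pmul_def)
  also have "\<dots> = sum ?f (SIGMA i:{n-b..a}. {n-i..b})"
  proof (rule sum.mono_neutral_left)
    show "finite (SIGMA i:{n-b..a}. {n-i..b})" by auto
    show "{(i, k). n \<le> i + k \<and> A i \<noteq> 0 \<and> B k \<noteq> 0} \<subseteq> (SIGMA i:{n-b..a}. {n-i..b})"
    proof
      fix x assume "x \<in> {(i, k). n \<le> i + k \<and> A i \<noteq> 0 \<and> B k \<noteq> 0}"
      then obtain i k where x: "x = (i,k)" "n \<le> i + k" "A i \<noteq> 0" "B k \<noteq> 0" by auto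
      then have "i \<le> a" "k \<le> b" using A B unfolding bnd_def by (auto simp: not_less[symmetric])
      then show "x \<in> (SIGMA i:{n-b..a}. {n-i..b})" using x by auto
    qed
    show "\<forall>x\<in>(SIGMA i:{n-b..a}. {n-i..b}) - {(i, k). n \<le> i + k \<and> A i \<noteq> 0 \<and> B k \<noteq> 0}. ?f x = 0"
      by auto
  qed
  also have "\<dots> = (\<Sum>i\<in>{n-b..a}. \<Sum>k\<in>{n-i..b}.
            cst ((of_int i :: complex) gchoose nat (i+k-n)) * A i * Dapp r (nat (i+k-n)) (B k))"
    by (simp add: sum.Sigma)
  finally show ?thesis .
qed

lemma bnd_mono: "bnd A a \<Longrightarrow> a \<le> a' \<Longrightarrow> bnd A a'"
  by (auto simp: bnd_def)

lemma bnd_pmul: "bnd A a \<Longrightarrow> bnd B b \<Longrightarrow> bnd (pmul r A B) (a + b)"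
  unfolding bnd_def by (auto simp: pmul_fin[unfolded bnd_def])

lemma bnd_pone: "bnd pone 0" by (simp add: bnd_def pone_def)

lemma bnd_ppow: "bnd L 1 \<Longrightarrow> bnd (ppow r L k) (int k)"
proof (induct k)
  case 0 then show ?case by (simp add: bnd_pone)
next
  case (Suc k) then show ?case using bnd_pmul[of "ppow r L k" k L 1 r] by (simp add: add.commute)
qed

lemma gchoose_zero_left: "(0::complex) gchoose m = (if m = 0 then 1 else 0)"
  by (cases m) simp_all

lemma pmul_pone: "bnd L a \<Longrightarrow> pmul r pone L = L"
proof
  fix n assume L: "bnd L a"
  show "pmul r pone L n = L n"
  proof (cases "n \<le> a")
    case True
    have "pmul r pone L n = (\<Sum>i\<in>{n-a..0}. \<Sum>k\<in>{n-i..a}.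
            cst ((of_int i :: complex) gchoose nat (i+k-n)) * pone i * Dapp r (nat (i+k-n)) (L k))"
      by (rule pmul_fin[OF bnd_pone L])
    also have "\<dots> = (\<Sum>i\<in>{0}. \<Sum>k\<in>{n-i..a}.
            cst ((of_int i :: complex) gchoose nat (i+k-n)) * pone i * Dapp r (nat (i+k-n)) (L k))"
      by (rule sum.mono_neutral_right) (use True in \<open>auto simp: pone_def\<close>)
    also have "\<dots> = (\<Sum>k\<in>{n..a}. cst ((0 :: complex) gchoose nat (k-n)) * Dapp r (nat (k-n)) (L k))"
      by (simp add: pone_def)
    also have "\<dots> = (\<Sum>k\<in>{n}. cst ((0 :: complex) gchoose nat (k-n)) * Dapp r (nat (k-n)) (L k))"
      by (rule sum.mono_neutral_right) (use True in \<open>auto simp: gchoose_zero_left\<close>)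
    also have "\<dots> = L n" by simp
    finally show ?thesis .
  next
    case False then show ?thesis using bnd_pmul[OF bnd_pone L, of r] L by (auto simp: bnd_def)
  qed
qed

lemma ppow_1: "bnd L a \<Longrightarrow> ppow r L 1 = L"
  by (simp add: pmul_pone)

lemma sum_int_first: "(a::int) \<le> b \<Longrightarrow> sum f {a..b} = f a + sum f {a+1..b}"
proof -
  assume "a \<le> b"
  then have "{a..b} = insert a {a+1..b}" by auto
  then show ?thesis by simp
qed

lemma sum_int_last: "(a::int) \<le> b \<Longrightarrow> sum f {a..b} = sum f {a..b-1} + f b"
proof -
  assume "a \<le> b"
  then have "{a..b} = insert b {a..b-1}" by auto
  then show ?thesis by (simp add: add.commute)
qed


lemma ppow_Suc_fin:
  assumes "bnd L 1"
  shows "ppow r L (Suc k) n = (\<Sum>i\<in>{n-1..int k}. \<Sum>j\<in>{n-i..1}.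
            cst ((of_int i :: complex) gchoose nat (i+j-n)) * ppow r L k i * Dapp r (nat (i+j-n)) (L j))"
  using pmul_fin[OF bnd_ppow[OF assms, of r k] assms, of r n] by simp

lemma ppow_top:
  assumes "bnd L 1" "L 1 = 1"
  shows "ppow r L k (int k) = 1"
proof (induct k)
  case 0 then show ?case by (simp add: pone_def)
next
  case (Suc k)
  then show ?case by (subst ppow_Suc_fin[OF assms(1)]) (simp add: assms(2))
qed

lemma ppow_dep:
  assumes bL: "bnd L 1" and bM: "bnd M 1" and eq: "\<And>j. j \<ge> p \<Longrightarrow> L j = M j"
  shows "m \<ge> p + int k - 1 \<Longrightarrow> ppow r L k m = ppow r M k m"
proof (induct k arbitrary: m)
  case 0 then show ?case by simp
next
  case (Suc k)
  show ?case
    unfolding ppow_Suc_fin[OF bL] ppow_Suc_fin[OF bM]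
  proof (rule sum.cong[OF refl], rule sum.cong[OF refl])
    fix i j assume i: "i \<in> {m-1..int k}" and j: "j \<in> {m-i..1}"
    have "ppow r L k i = ppow r M k i" using Suc i by auto
    moreover have "L j = M j" using Suc i j by (intro eq) auto
    ultimately show "cst ((of_int i :: complex) gchoose nat (i+j-m)) * ppow r L k i * Dapp r (nat (i+j-m)) (L j) =
        cst ((of_int i :: complex) gchoose nat (i+j-m)) * ppow r M k i * Dapp r (nat (i+j-m)) (M j)" by simp
  qed
qed

definition trunc :: "psdo \<Rightarrow> int \<Rightarrow> psdo" where
  "trunc L n = (\<lambda>i. if i > - n then L i else 0)"

lemma bnd_trunc: "bnd L 1 \<Longrightarrow> bnd (trunc L n) 1"
  by (simp add: bnd_def trunc_def)

lemma ppow_pert: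
  assumes bL: "bnd L 1" and L1: "L 1 = 1" and n: "n \<ge> 1"
  shows "k \<ge> 1 \<Longrightarrow> ppow r L k (int k - 1 - n) = ppow r (trunc L n) k (int k - 1 - n) + of_nat k * L (-n)"
proof (induct k)
  case 0 then show ?case by simp
next
  case (Suc k)
  define T where "T = trunc L n"
  have bT: "bnd T 1" using bnd_trunc[OF bL] by (simp add: T_def)
  have T1: "T 1 = 1" using n L1 by (simp add: T_def trunc_def)
  have Tn: "T (-n) = 0" by (simp add: T_def trunc_def)
  have TL: "\<And>j. j \<ge> 1 - n \<Longrightarrow> T j = L j" by (simp add: T_def trunc_def)
  show ?case
  proof (cases "k = 0")
    case True
    then show ?thesis using ppow_1[OF bL, of r] ppow_1[OF bT, of r] Tn by (simp add: T_def)
  next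
    case False
    then have IH: "ppow r L k (int k - 1 - n) = ppow r T k (int k - 1 - n) + of_nat k * L (-n)"
      using Suc by (simp add: T_def)
    define F where "F X i = (\<Sum>j\<in>{int k - n - i..1}.
            cst ((of_int i :: complex) gchoose nat (i+j-(int k - n))) * ppow r X k i * Dapp r (nat (i+j-(int k - n))) (X j))" for X i
    have exp: "ppow r X (Suc k) (int (Suc k) - 1 - n) = F X (int k - n - 1) + (\<Sum>i\<in>{int k - n..int k - 1}. F X i) + F X (int k)"
      if "bnd X 1" for X
    proof -
      have "ppow r X (Suc k) (int (Suc k) - 1 - n) = (\<Sum>i\<in>{int k - n - 1..int k}. F X i)"
        unfolding ppow_Suc_fin[OF that] F_def by simp
      also have "\<dots> = F X (int k - n - 1) + (\<Sum>i\<in>{int k - n..int k}. F X i)"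
        using n by (subst sum_int_first) auto
      also have "(\<Sum>i\<in>{int k - n..int k}. F X i) = (\<Sum>i\<in>{int k - n..int k - 1}. F X i) + F X (int k)"
        using n by (subst sum_int_last) auto
      finally show ?thesis by simp
    qed
    have F1: "F X (int k - n - 1) = ppow r X k (int k - 1 - n)" if "X 1 = 1" for X
    proof -
      have "F X (int k - n - 1) = ppow r X k (int k - n - 1)" unfolding F_def using that by simp
      moreover have "int k - n - 1 = int k - 1 - n" by simp
      ultimately show ?thesis by metis
    qed
    have Ftop: "F X (int k) = X (-n) + (\<Sum>j\<in>{1-n..1}.
            cst ((of_int (int k) :: complex) gchoose nat (j + n)) * Dapp r (nat (j + n)) (X j))"
      if "bnd X 1" "X 1 = 1" for X
    proof -
      have "F X (int k) = (\<Sum>j\<in>{-n..1}.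
            cst ((of_int (int k) :: complex) gchoose nat (j + n)) * Dapp r (nat (j + n)) (X j))"
        unfolding F_def using ppow_top[OF that, of r k] by simp
      also have "\<dots> = X (-n) + (\<Sum>j\<in>{1-n..1}.
            cst ((of_int (int k) :: complex) gchoose nat (j + n)) * Dapp r (nat (j + n)) (X j))"
        using n by (subst sum_int_first) (auto simp: add.commute)
      finally show ?thesis .
    qed
    have mid: "(\<Sum>i\<in>{int k - n..int k - 1}. F L i) = (\<Sum>i\<in>{int k - n..int k - 1}. F T i)"
    proof (rule sum.cong[OF refl])
      fix i assume i: "i \<in> {int k - n..int k - 1}"
      have "ppow r L k i = ppow r T k i"
        by (rule ppow_dep[OF bL bT, of "1 - n"]) (use i TL in auto)
      moreover have "\<And>j. j \<in> {int k - n - i..1} \<Longrightarrow> L j = T j" using i TL by auto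
      ultimately show "F L i = F T i" unfolding F_def by (intro sum.cong) auto
    qed
    have top: "(\<Sum>j\<in>{1-n..1}. cst ((of_int (int k) :: complex) gchoose nat (j + n)) * Dapp r (nat (j + n)) (L j))
       = (\<Sum>j\<in>{1-n..1}. cst ((of_int (int k) :: complex) gchoose nat (j + n)) * Dapp r (nat (j + n)) (T j))"
      using TL by (intro sum.cong) auto
    show ?thesis
      unfolding T_def[symmetric] exp[OF bL] exp[OF bT] F1[of L, OF L1] F1[of T, OF T1] Ftop[of L, OF bL L1] Ftop[of T, OF bT T1] mid top IH Tn
      by (simp add: algebra_simps)
  qed
qed


lemma cst_inv_of_nat: "r \<noteq> 0 \<Longrightarrow> cst (1 / of_nat r) * of_nat r = (1::dpoly)"
  by (simp add: cst_of_nat[symmetric] cst_mult[symmetric])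

lemma of_nat_cancel_dpoly: "r \<noteq> 0 \<Longrightarrow> of_nat r * x = of_nat r * (y::dpoly) \<Longrightarrow> x = y"
proof -
  assume r: "r \<noteq> 0" and h: "of_nat r * x = of_nat r * (y::dpoly)"
  from h have "cst (1/of_nat r) * (of_nat r * x) = cst (1/of_nat r) * (of_nat r * y)" by simp
  then show ?thesis by (simp only: mult.assoc[symmetric] cst_inv_of_nat[OF r] mult_1)
qed

primrec tseq :: "nat \<Rightarrow> nat \<Rightarrow> psdo" where
  "tseq r 0 = (\<lambda>i. if i = 1 then 1 else 0)"
| "tseq r (Suc n) = (\<lambda>i. if i = - int n - 1
      then cst (1 / of_nat r) * (Qop r (int r - 2 - int n) - ppow r (tseq r n) r (int r - 2 - int n))
      else tseq r n i)"

lemma tseq_basic: "bnd (tseq r n) 1 \<and> tseq r n 1 = 1 \<and> tseq r n 0 = 0"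
  by (induct n) (auto simp: bnd_def)

lemma tseq_low: "i < - int n \<Longrightarrow> tseq r n i = 0"
  by (induct n) auto

lemma tseq_stable: "i \<ge> - int n \<Longrightarrow> n \<le> N \<Longrightarrow> tseq r N i = tseq r n i"
proof (induct N)
  case 0 then show ?case by simp
next
  case (Suc N)
  show ?case
  proof (cases "n = Suc N")
    case False
    then have "n \<le> N" using Suc by simp
    then have "i \<noteq> - int N - 1" using Suc by simp
    then have "tseq r (Suc N) i = tseq r N i" by simp
    then show ?thesis using Suc \<open>n \<le> N\<close> by simp
  qed simp
qed

lemma trunc_tseq: "trunc (tseq r (Suc n)) (int n + 1) = tseq r n"
proof
  fix i
  show "trunc (tseq r (Suc n)) (int n + 1) i = tseq r n i"
  proof (cases "i > - (int n + 1)")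
    case True
    then have "i \<noteq> - int n - 1" by simp
    then show ?thesis using True by (simp add: trunc_def)
  next
    case False
    then show ?thesis by (simp add: trunc_def tseq_low)
  qed
qed

definition Lr :: "nat \<Rightarrow> psdo" where
  "Lr r = (\<lambda>i. tseq r (nat (- i)) i)"

lemma Lr_tseq: "i \<ge> - int n \<Longrightarrow> Lr r i = tseq r n i"
  unfolding Lr_def by (rule tseq_stable[symmetric]) auto

lemma Lr_basic: "bnd (Lr r) 1" "Lr r 1 = 1" "Lr r 0 = 0"
proof -
  have e: "Lr r i = tseq r 0 i" if "i \<ge> 0" for i by (rule Lr_tseq) (use that in simp)
  show "bnd (Lr r) 1" using e by (simp add: bnd_def)
  show "Lr r 1 = 1" "Lr r 0 = 0" using e[of 1] e[of 0] by simp_all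
qed

lemma ppow_D: "ppow r (tseq r 0) k = (\<lambda>i. if i = int k then 1 else 0)"
proof (induct k)
  case 0 then show ?case by (simp add: pone_def fun_eq_iff)
next
  case (Suc k)
  show ?case
  proof
    fix n
    have b0: "bnd (tseq r 0) 1" using tseq_basic[of r 0] by simp
    have "ppow r (tseq r 0) (Suc k) n = (\<Sum>i\<in>{n-1..int k}. \<Sum>j\<in>{n-i..1}.
            cst ((of_int i :: complex) gchoose nat (i+j-n)) * ppow r (tseq r 0) k i * Dapp r (nat (i+j-n)) (tseq r 0 j))"
      by (rule ppow_Suc_fin[OF b0])
    also have "\<dots> = (\<Sum>i\<in>{n-1..int k}. if i = int k then (\<Sum>j\<in>{n-i..1}. if j = 1 then (if n = int k + 1 then 1 else 0) else 0) else 0)"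
    proof (rule sum.cong[OF refl])
      fix i assume i: "i \<in> {n-1..int k}"
      show "(\<Sum>j\<in>{n-i..1}. cst ((of_int i :: complex) gchoose nat (i+j-n)) * ppow r (tseq r 0) k i * Dapp r (nat (i+j-n)) (tseq r 0 j))
        = (if i = int k then (\<Sum>j\<in>{n-i..1}. if j = 1 then (if n = int k + 1 then 1 else 0) else 0) else 0)"
      proof (cases "i = int k")
        case True
        have "(\<Sum>j\<in>{n-i..1}. cst ((of_int i :: complex) gchoose nat (i+j-n)) * ppow r (tseq r 0) k i * Dapp r (nat (i+j-n)) (tseq r 0 j))
           = (\<Sum>j\<in>{n-i..1}. if j = 1 then (if n = int k + 1 then 1 else 0) else 0)"
        proof (rule sum.cong[OF refl])
          fix j assume j: "j \<in> {n-i..1}"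
          show "cst ((of_int i :: complex) gchoose nat (i+j-n)) * ppow r (tseq r 0) k i * Dapp r (nat (i+j-n)) (tseq r 0 j)
             = (if j = 1 then (if n = int k + 1 then 1 else 0) else 0)"
            using j True Suc by (cases "j = 1") (auto simp: Dapp_one)
        qed
        then show ?thesis using True by simp
      qed (use Suc in \<open>simp del: tseq.simps\<close>)
    qed
    also have "\<dots> = (if n = int (Suc k) then 1 else 0)"
      by (auto simp: sum.delta)
    finally show "ppow r (tseq r 0) (Suc k) n = (if n = int (Suc k) then 1 else 0)" .
  qed
qed

lemma Lr_root:
  assumes r: "r \<ge> 2"
  shows "is_Qroot r (Lr r)"
proof -
  have b: "bnd (Lr r) 1" and L1: "Lr r 1 = 1" and L0: "Lr r 0 = 0" using Lr_basic by auto
  have "ppow r (Lr r) r m = Qop r m" for m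
  proof -
    consider "m > int r" | "m = int r" | "m \<le> int r - 1" by linarith
    then show ?thesis
    proof cases
      case 1 then show ?thesis using bnd_ppow[OF b, of r r] r by (auto simp: bnd_def Qop_def)
    next
      case 2 then show ?thesis using ppow_top[OF b L1, of r r] by (simp add: Qop_def)
    next
      case 3
      define n where "n = nat (int r - 1 - m)"
      have m: "m = int r - 1 - int n" using 3 by (simp add: n_def)
      have "ppow r (Lr r) r m = ppow r (tseq r n) r m"
        by (rule ppow_dep[OF b conjunct1[OF tseq_basic], of "- int n"]) (auto simp: Lr_tseq m)
      also have "\<dots> = Qop r m"
      proof (cases n)
        case 0
        then show ?thesis using r by (simp add: ppow_D m Qop_def del: tseq.simps)
      next
        case (Suc n')
        have bs: "bnd (tseq r (Suc n')) 1" "tseq r (Suc n') 1 = 1" using tseq_basic[of r "Suc n'"] by (simp_all del: tseq.simps)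
        have "ppow r (tseq r (Suc n')) r (int r - 1 - (int n' + 1)) =
              ppow r (trunc (tseq r (Suc n')) (int n' + 1)) r (int r - 1 - (int n' + 1))
              + of_nat r * tseq r (Suc n') (- (int n' + 1))"
          by (rule ppow_pert[OF bs]) (use r in auto)
        also have "\<dots> = ppow r (tseq r n') r (int r - 2 - int n')
              + of_nat r * (cst (1 / of_nat r) * (Qop r (int r - 2 - int n') - ppow r (tseq r n') r (int r - 2 - int n')))"
        proof -
          have c: "tseq r (Suc n') (- (int n' + 1)) = cst (1 / of_nat r) * (Qop r (int r - 2 - int n') - ppow r (tseq r n') r (int r - 2 - int n'))"
            by simp
          have idx: "int r - 1 - (int n' + 1) = int r - 2 - int n'" by simp
          show ?thesis by (simp only: trunc_tseq c idx)
        qed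
        also have "\<dots> = Qop r (int r - 2 - int n')"
          using cst_inv_of_nat[of r] r by (simp add: mult.assoc[symmetric] mult.commute[of "of_nat r"])
        finally have fin: "ppow r (tseq r (Suc n')) r (int r - 1 - (int n' + 1)) = Qop r (int r - 2 - int n')" .
        have m1: "int r - 1 - (int n' + 1) = m" and m2: "int r - 2 - int n' = m" using Suc m by simp_all
        show ?thesis using fin unfolding Suc m1 m2 .
      qed
      finally show ?thesis .
    qed
  qed
  then show ?thesis using b L1 L0 by (auto simp: is_Qroot_def bnd_def fun_eq_iff)
qed

lemma Qroot_unique:
  assumes r: "r \<ge> 1" and h1: "is_Qroot r L1" and h2: "is_Qroot r L2"
  shows "L1 = L2"
proof (rule ccontr)
  assume ne: "L1 \<noteq> L2"
  have b1: "bnd L1 1" "L1 1 = 1" and b2: "bnd L2 1" "L2 1 = 1"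
    using h1 h2 by (auto simp: is_Qroot_def bnd_def)
  have geq: "L1 i = L2 i" if "i \<ge> 0" for i
  proof -
    have "i = 0 \<or> i = 1 \<or> i > 1" using that by linarith
    then consider "i = 0" | "i = 1" | "i > 1" by blast
    then show ?thesis using h1 h2 by cases (auto simp: is_Qroot_def)
  qed
  obtain i where "L1 i \<noteq> L2 i" using ne by auto
  then have "L1 (- int (nat (- i))) \<noteq> L2 (- int (nat (- i)))" using geq by (cases "i \<ge> 0") auto
  then have ex: "\<exists>n. L1 (- int n) \<noteq> L2 (- int n)" by blast
  define n0 where "n0 = (LEAST n. L1 (- int n) \<noteq> L2 (- int n))"
  have n0: "L1 (- int n0) \<noteq> L2 (- int n0)" unfolding n0_def by (rule LeastI_ex[OF ex])
  have less: "L1 (- int n) = L2 (- int n)" if "n < n0" for n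
    using not_less_Least[of n "\<lambda>n. L1 (- int n) \<noteq> L2 (- int n)"] that by (auto simp: n0_def)
  have n0pos: "n0 \<ge> 1" using n0 geq[of 0] by (cases n0) auto
  have agree: "L1 j = L2 j" if "j > - int n0" for j
  proof (cases "j \<ge> 0")
    case True then show ?thesis by (rule geq)
  next
    case False
    then have "j = - int (nat (- j))" "nat (- j) < n0" using that by auto
    then show ?thesis using less by metis
  qed
  have tr: "trunc L1 (int n0) = trunc L2 (int n0)"
    using agree by (auto simp: trunc_def fun_eq_iff)
  have "ppow r L1 r (int r - 1 - int n0) = ppow r (trunc L1 (int n0)) r (int r - 1 - int n0) + of_nat r * L1 (- int n0)"
    by (rule ppow_pert[OF b1]) (use r n0pos in auto)
  moreover have "ppow r L2 r (int r - 1 - int n0) = ppow r (trunc L2 (int n0)) r (int r - 1 - int n0) + of_nat r * L2 (- int n0)"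
    by (rule ppow_pert[OF b2]) (use r n0pos in auto)
  moreover have "ppow r L1 r = ppow r L2 r" using h1 h2 by (simp add: is_Qroot_def)
  ultimately have "of_nat r * L1 (- int n0) = of_nat r * L2 (- int n0)" using tr by simp
  then have "L1 (- int n0) = L2 (- int n0)" by (rule of_nat_cancel_dpoly[rotated]) (use r in auto)
  then show False using n0 by simp
qed

lemma Qroot_is:
  assumes "r \<ge> 2" shows "is_Qroot r (Qroot r)"
proof -
  have u: "\<And>x. is_Qroot r x \<Longrightarrow> x = Lr r"
    using Qroot_unique[of r _ "Lr r"] Lr_root[OF assms] assms by auto
  show ?thesis unfolding Qroot_def by (rule theI[of "is_Qroot r", OF Lr_root[OF assms] u])
qed

lemma Qroot_basic:
  assumes "r \<ge> 2"
  shows "bnd (Qroot r) 1" "Qroot r 1 = 1" "Qroot r 0 = 0" "ppow r (Qroot r) r = Qop r"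
  using Qroot_is[OF assms] by (auto simp: is_Qroot_def bnd_def)


inductive_set Sg :: "nat \<Rightarrow> nat \<Rightarrow> dpoly set" for r p where
  Sg_cst: "cst c \<in> Sg r p"
| Sg_var: "p \<le> i \<Longrightarrow> i \<le> r - 2 \<Longrightarrow> var (i, k) \<in> Sg r p"
| Sg_add: "a \<in> Sg r p \<Longrightarrow> b \<in> Sg r p \<Longrightarrow> a + b \<in> Sg r p"
| Sg_mult: "a \<in> Sg r p \<Longrightarrow> b \<in> Sg r p \<Longrightarrow> a * b \<in> Sg r p"

lemma Sg_0[simp]: "0 \<in> Sg r p" using Sg_cst[of 0] by simp
lemma Sg_1[simp]: "1 \<in> Sg r p" using Sg_cst[of 1] by simp
lemma Sg_of_nat[simp]: "of_nat n \<in> Sg r p" using Sg_cst[of "of_nat n"] by (simp add: cst_of_nat)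
lemma Sg_uminus: "a \<in> Sg r p \<Longrightarrow> - a \<in> Sg r p"
  using Sg_mult[OF Sg_cst[of "-1"]] by (simp add: cst_minus)
lemma Sg_diff: "a \<in> Sg r p \<Longrightarrow> b \<in> Sg r p \<Longrightarrow> a - b \<in> Sg r p"
  unfolding diff_conv_add_uminus by (intro Sg_add Sg_uminus)
lemma Sg_sum: "(\<And>x. x \<in> A \<Longrightarrow> f x \<in> Sg r p) \<Longrightarrow> sum f A \<in> Sg r p"
  by (induct A rule: infinite_finite_induct) (auto intro: Sg_add)
lemma Sg_cst_mult: "a \<in> Sg r p \<Longrightarrow> cst c * a \<in> Sg r p"
  by (rule Sg_mult[OF Sg_cst])

lemma Sg_mono: "x \<in> Sg r p' \<Longrightarrow> p \<le> p' \<Longrightarrow> x \<in> Sg r p"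
  by (induct x rule: Sg.induct) (auto intro: Sg.intros)

lemma Sg_dd: "x \<in> Sg r p \<Longrightarrow> dd x \<in> Sg r p"
  by (induct x rule: Sg.induct) (auto intro: Sg.intros simp: dd_add dd_mult dd_var)

lemma Sg_ddpow: "x \<in> Sg r p \<Longrightarrow> (dd ^^ j) x \<in> Sg r p"
  by (induct j) (auto intro: Sg_dd)

lemma Sg_Dapp: "x \<in> Sg r p \<Longrightarrow> Dapp r' j x \<in> Sg r p"
  unfolding Dapp_def by (intro Sg_cst_mult Sg_ddpow)

definition coefin :: "psdo \<Rightarrow> dpoly set \<Rightarrow> bool" where
  "coefin A S \<longleftrightarrow> (\<forall>i. A i \<in> S)"

lemma Sg_pmul:
  assumes "bnd A a" "bnd B b" "coefin A (Sg r p)" "coefin B (Sg r p)"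
  shows "coefin (pmul r' A B) (Sg r p)"
  unfolding coefin_def
proof
  fix n
  show "pmul r' A B n \<in> Sg r p"
    unfolding pmul_fin[OF assms(1,2)]
    using assms(3,4) unfolding coefin_def
    by (intro Sg_sum Sg_mult Sg_cst_mult Sg_Dapp) auto
qed

lemma Sg_ppow:
  assumes "bnd L 1" "coefin L (Sg r p)"
  shows "coefin (ppow r' L k) (Sg r p)"
proof (induct k)
  case 0 then show ?case by (simp add: coefin_def pone_def)
next
  case (Suc k) then show ?case using Sg_pmul[OF bnd_ppow[OF assms(1)] assms(1) _ assms(2)] by simp
qed

lemma Qop_Sg: "n \<ge> 1 \<Longrightarrow> Qop r (int r - 1 - int n) \<in> Sg r (r - 1 - n)"
  by (auto simp: Qop_def intro!: Sg_var)

lemma Qroot_tri: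
  assumes r: "r \<ge> 2"
  shows "n \<ge> 1 \<Longrightarrow> Qroot r (- int n) - cst (1 / of_nat r) * Qop r (int r - 1 - int n) \<in> Sg r (r - n)
              \<and> Qroot r (- int n) \<in> Sg r (r - 1 - n)"
proof (induct n rule: less_induct)
  case (less n)
  define L where "L = Qroot r"
  have bL: "bnd L 1" and L1: "L 1 = 1" and L0: "L 0 = 0" and LQ: "ppow r L r = Qop r"
    using Qroot_basic[OF r] by (simp_all add: L_def)
  define T where "T = trunc L (int n)"
  have bT: "bnd T 1" using bnd_trunc[OF bL] by (simp add: T_def)
  have cT: "coefin T (Sg r (r - n))"
    unfolding coefin_def
  proof
    fix i
    show "T i \<in> Sg r (r - n)"
    proof (cases "i > - int n")
      case False then show ?thesis by (simp add: T_def trunc_def)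
    next
      case True
      show ?thesis
      proof (cases "i \<ge> 0")
        case True
        then have "i = 0 \<or> i = 1 \<or> i > 1" by linarith
        then show ?thesis using bL L1 L0 by (auto simp: T_def trunc_def bnd_def)
      next
        case False
        define j where "j = nat (- i)"
        have ij: "i = - int j" "1 \<le> j" "j < n" using False True by (auto simp: j_def)
        then have "L (- int j) \<in> Sg r (r - 1 - j)" using less by (simp add: L_def)
        then have "L (- int j) \<in> Sg r (r - n)" by (rule Sg_mono) (use ij in auto)
        then show ?thesis using ij True by (simp add: T_def trunc_def)
      qed
    qed
  qed
  have cP: "ppow r T r (int r - 1 - int n) \<in> Sg r (r - n)"
    using Sg_ppow[OF bT cT, of r r] by (simp add: coefin_def)
  have "ppow r L r (int r - 1 - int n) = ppow r T r (int r - 1 - int n) + of_nat r * L (- int n)"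
    unfolding T_def by (rule ppow_pert[OF bL L1]) (use less r in auto)
  then have eq: "of_nat r * L (- int n) = Qop r (int r - 1 - int n) - ppow r T r (int r - 1 - int n)"
    using LQ by (simp add: algebra_simps)
  have "L (- int n) = cst (1 / of_nat r) * (of_nat r * L (- int n))"
    using cst_inv_of_nat[of r] r by (simp add: mult.assoc[symmetric])
  also have "\<dots> = cst (1 / of_nat r) * Qop r (int r - 1 - int n) - cst (1 / of_nat r) * ppow r T r (int r - 1 - int n)"
    by (simp add: eq algebra_simps)
  finally have eq2: "L (- int n) - cst (1 / of_nat r) * Qop r (int r - 1 - int n) = - (cst (1 / of_nat r) * ppow r T r (int r - 1 - int n))"
    by simp
  have A: "L (- int n) - cst (1 / of_nat r) * Qop r (int r - 1 - int n) \<in> Sg r (r - n)"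
    unfolding eq2 by (intro Sg_uminus Sg_cst_mult cP)
  have B: "cst (1 / of_nat r) * Qop r (int r - 1 - int n) \<in> Sg r (r - 1 - n)"
    by (intro Sg_cst_mult Qop_Sg) (use less in auto)
  have "L (- int n) = (L (- int n) - cst (1 / of_nat r) * Qop r (int r - 1 - int n)) + cst (1 / of_nat r) * Qop r (int r - 1 - int n)"
    by simp
  also have "\<dots> \<in> Sg r (r - 1 - n)"
    by (intro Sg_add B Sg_mono[OF A]) auto
  finally show ?case using A by (simp add: L_def)
qed

lemma Qroot_Sg0:
  assumes r: "r \<ge> 2" shows "coefin (Qroot r) (Sg r 0)"
  unfolding coefin_def
proof
  fix i
  show "Qroot r i \<in> Sg r 0"
  proof (cases "i \<ge> 0")
    case True
    then have "i = 0 \<or> i = 1 \<or> i > 1" by linarith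
    then show ?thesis using Qroot_basic[OF r] by (auto simp: bnd_def)
  next
    case False
    then have e: "i = - int (nat (- i))" and n1: "nat (- i) \<ge> 1" by auto
    have "Qroot r (- int (nat (- i))) \<in> Sg r (r - 1 - nat (- i))" using Qroot_tri[OF r n1] by blast
    then have "Qroot r (- int (nat (- i))) \<in> Sg r 0" by (rule Sg_mono) simp
    then show ?thesis using e by simp
  qed
qed

lemma ResQ_Sg0: "r \<ge> 2 \<Longrightarrow> ResQ r k \<in> Sg r 0"
  using Sg_ppow[OF Qroot_basic(1) Qroot_Sg0, of r r k] by (simp add: ResQ_def coefin_def)

lemma ResQ_tri:
  assumes r: "r \<ge> 2" and k: "k \<ge> 1"
  shows "ResQ r k - cst (of_nat k / of_nat r) * Qop r (int r - 1 - int k) \<in> Sg r (r - k)"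
proof -
  define L where "L = Qroot r"
  have bL: "bnd L 1" and L1: "L 1 = 1"
    using Qroot_basic[OF r] by (simp_all add: L_def)
  define T where "T = trunc L (int k)"
  have bT: "bnd T 1" using bnd_trunc[OF bL] by (simp add: T_def)
  have cT: "coefin T (Sg r (r - k))"
    unfolding coefin_def
  proof
    fix i
    show "T i \<in> Sg r (r - k)"
    proof (cases "i > - int k")
      case False then show ?thesis by (simp add: T_def trunc_def)
    next
      case True
      show ?thesis
      proof (cases "i \<ge> 0")
        case True
        then have "i = 0 \<or> i = 1 \<or> i > 1" by linarith
        then show ?thesis using Qroot_basic[OF r] by (auto simp: T_def trunc_def bnd_def L_def)
      next
        case False
        define j where "j = nat (- i)"
        have ij: "i = - int j" "1 \<le> j" "j < k" using False True by (auto simp: j_def)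
        then have "L (- int j) \<in> Sg r (r - 1 - j)" using Qroot_tri[OF r] by (simp add: L_def)
        then have "L (- int j) \<in> Sg r (r - k)" by (rule Sg_mono) (use ij in auto)
        then show ?thesis using ij True by (simp add: T_def trunc_def)
      qed
    qed
  qed
  have cP: "ppow r T k (-1) \<in> Sg r (r - k)"
    using Sg_ppow[OF bT cT, of r k] by (simp add: coefin_def)
  have "ppow r L k (int k - 1 - int k) = ppow r T k (int k - 1 - int k) + of_nat k * L (- int k)"
    unfolding T_def by (rule ppow_pert[OF bL L1]) (use k in auto)
  then have eq: "ResQ r k = ppow r T k (-1) + of_nat k * L (- int k)"
    by (simp add: ResQ_def L_def)
  have tri: "L (- int k) - cst (1 / of_nat r) * Qop r (int r - 1 - int k) \<in> Sg r (r - k)"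
    using Qroot_tri[OF r k] by (simp add: L_def)
  have "ResQ r k - cst (of_nat k / of_nat r) * Qop r (int r - 1 - int k)
     = ppow r T k (-1) + of_nat k * (L (- int k) - cst (1 / of_nat r) * Qop r (int r - 1 - int k))"
  proof -
    have c: "cst (of_nat k / of_nat r) = of_nat k * cst (1 / of_nat r)"
      unfolding cst_of_nat[symmetric] cst_mult[symmetric] by simp
    show ?thesis unfolding eq c by (simp add: right_diff_distrib mult.assoc)
  qed
  also have "\<dots> \<in> Sg r (r - k)"
    by (intro Sg_add cP Sg_mult Sg_of_nat tri)
  finally show ?thesis .
qed


section \<open>The algebra generated by the z's\<close>

definition Pset :: "nat \<Rightarrow> dpoly set" where
  "Pset r = {P. \<forall>mo\<in>Poly_Mapping.keys P. \<forall>v\<in>Poly_Mapping.keys mo. fst v \<le> r - 2}"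

definition Jw :: "nat \<Rightarrow> dpoly set" where
  "Jw r = {W. W \<in> Pset r \<and> (\<forall>mo\<in>Poly_Mapping.keys W. \<exists>v\<in>Poly_Mapping.keys mo. 1 \<le> snd v)}"

lemma Pset_add: "P \<in> Pset r \<Longrightarrow> Q \<in> Pset r \<Longrightarrow> P + Q \<in> Pset r"
  using keys_add[of P Q] by (auto simp: Pset_def)

lemma Pset_mult: "P \<in> Pset r \<Longrightarrow> Q \<in> Pset r \<Longrightarrow> P * Q \<in> Pset r"
  using keys_mult[of P Q] by (fastforce simp: Pset_def lookup_add_nat_keys)

lemma Pset_cst: "cst c \<in> Pset r"
  by (simp add: Pset_def cst_def)

lemma Pset_var: "fst v \<le> r - 2 \<Longrightarrow> var v \<in> Pset r"
  by (simp add: Pset_def var_def)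

lemma Pset_0: "0 \<in> Pset r" by (simp add: Pset_def)

lemma Pset_sum: "(\<And>x. x \<in> A \<Longrightarrow> f x \<in> Pset r) \<Longrightarrow> sum f A \<in> Pset r"
  by (induct A rule: infinite_finite_induct) (simp_all add: Pset_add Pset_0)

lemma Jw_add: "P \<in> Jw r \<Longrightarrow> Q \<in> Jw r \<Longrightarrow> P + Q \<in> Jw r"
  using keys_add[of P Q] Pset_add[of P r Q] by (auto simp: Jw_def)

lemma Jw_mult: "P \<in> Pset r \<Longrightarrow> Q \<in> Jw r \<Longrightarrow> P * Q \<in> Jw r"
proof -
  assume P: "P \<in> Pset r" and Q: "Q \<in> Jw r"
  have "P * Q \<in> Pset r" using P Q by (intro Pset_mult) (auto simp: Jw_def)
  moreover have "\<exists>v\<in>Poly_Mapping.keys mo. 1 \<le> snd v" if mo: "mo \<in> Poly_Mapping.keys (P * Q)" for mo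
  proof -
    obtain a b where "mo = a + b" "a \<in> Poly_Mapping.keys P" "b \<in> Poly_Mapping.keys Q"
      using keys_mult[of P Q] mo by blast
    then show ?thesis using Q by (auto simp: Jw_def lookup_add_nat_keys)
  qed
  ultimately show ?thesis by (simp add: Jw_def)
qed

lemma Jw_0: "0 \<in> Jw r" by (simp add: Jw_def Pset_def)

lemma Jw_var: "fst v \<le> r - 2 \<Longrightarrow> snd v \<ge> 1 \<Longrightarrow> var v \<in> Jw r"
  by (auto simp: Jw_def Pset_def var_def)

definition JA :: "nat \<Rightarrow> dpoly set" where
  "JA r = {peval (zvar r) W | W. W \<in> Jw r}"

definition PA :: "nat \<Rightarrow> dpoly set" where
  "PA r = {peval (zvar r) P | P. P \<in> Pset r}"

lemma JA_PA: "x \<in> JA r \<Longrightarrow> x \<in> PA r"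
  by (auto simp: JA_def PA_def Jw_def)

lemma PA_add: "x \<in> PA r \<Longrightarrow> y \<in> PA r \<Longrightarrow> x + y \<in> PA r"
proof -
  assume "x \<in> PA r" "y \<in> PA r"
  then obtain P Q where "P \<in> Pset r" "Q \<in> Pset r" "x = peval (zvar r) P" "y = peval (zvar r) Q"
    by (auto simp: PA_def)
  then show ?thesis unfolding PA_def by (intro CollectI exI[of _ "P + Q"]) (simp add: Pset_add peval_add)
qed

lemma PA_mult: "x \<in> PA r \<Longrightarrow> y \<in> PA r \<Longrightarrow> x * y \<in> PA r"
proof -
  assume "x \<in> PA r" "y \<in> PA r"
  then obtain P Q where "P \<in> Pset r" "Q \<in> Pset r" "x = peval (zvar r) P" "y = peval (zvar r) Q"
    by (auto simp: PA_def)
  then show ?thesis unfolding PA_def by (intro CollectI exI[of _ "P * Q"]) (simp add: Pset_mult peval_mult)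
qed

lemma PA_cst: "cst c \<in> PA r"
  unfolding PA_def by (auto intro!: exI[where x="cst c"] Pset_cst)

lemma PA_z: "m \<le> r - 2 \<Longrightarrow> zvar r (m, j) \<in> PA r"
  unfolding PA_def by (auto intro!: exI[where x="var (m, j)"] Pset_var)

lemma PA_uminus: "x \<in> PA r \<Longrightarrow> - x \<in> PA r"
  using PA_mult[OF PA_cst[of "-1"]] by (simp add: cst_minus)

lemma PA_diff: "x \<in> PA r \<Longrightarrow> y \<in> PA r \<Longrightarrow> x - y \<in> PA r"
  unfolding diff_conv_add_uminus by (intro PA_add PA_uminus)

lemma JA_add: "x \<in> JA r \<Longrightarrow> y \<in> JA r \<Longrightarrow> x + y \<in> JA r"
proof -
  assume "x \<in> JA r" "y \<in> JA r"
  then obtain P Q where "P \<in> Jw r" "Q \<in> Jw r" "x = peval (zvar r) P" "y = peval (zvar r) Q"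
    by (auto simp: JA_def)
  then show ?thesis unfolding JA_def by (intro CollectI exI[of _ "P + Q"]) (simp add: Jw_add peval_add)
qed

lemma JA_mult: "x \<in> PA r \<Longrightarrow> y \<in> JA r \<Longrightarrow> x * y \<in> JA r"
proof -
  assume "x \<in> PA r" "y \<in> JA r"
  then obtain P Q where "P \<in> Pset r" "Q \<in> Jw r" "x = peval (zvar r) P" "y = peval (zvar r) Q"
    by (auto simp: JA_def PA_def)
  then show ?thesis unfolding JA_def by (intro CollectI exI[of _ "P * Q"]) (simp add: Jw_mult peval_mult)
qed

lemma JA_0: "0 \<in> JA r"
  unfolding JA_def by (auto intro!: exI[where x=0] Jw_0)

lemma JA_z: "m \<le> r - 2 \<Longrightarrow> j \<ge> 1 \<Longrightarrow> zvar r (m, j) \<in> JA r"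
  unfolding JA_def by (auto intro!: exI[where x="var (m, j)"] Jw_var)

lemma dd_zvar: "dd (zvar r (m, j)) = zvar r (m, Suc j)"
  by (simp add: zvar_def)

lemma JA_sum: "(\<And>x. x \<in> A \<Longrightarrow> f x \<in> JA r) \<Longrightarrow> sum f A \<in> JA r"
  by (induct A rule: infinite_finite_induct) (auto intro: JA_add JA_0)

lemma PA_pow: "x \<in> PA r \<Longrightarrow> x ^ n \<in> PA r"
  using PA_cst[of 1 r] by (induct n) (auto intro: PA_mult)

lemma mprod_dd:
  assumes "finite V" "\<And>v. v \<in> V \<Longrightarrow> fst v \<le> r - 2"
  shows "dd (\<Prod>v\<in>V. zvar r v ^ e v) \<in> JA r \<and> (\<Prod>v\<in>V. zvar r v ^ e v) \<in> PA r"
  using assms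
proof (induct V rule: finite_induct)
  case empty
  then show ?case using PA_cst[of 1 r] by (simp add: JA_0)
next
  case (insert w V)
  have zw: "zvar r w \<in> PA r" using insert PA_z[of "fst w" r "snd w"] by simp
  have dzw: "dd (zvar r w) \<in> JA r"
    using dd_zvar[of r "fst w" "snd w"] JA_z[of "fst w" r "Suc (snd w)"] insert by simp
  have dw: "dd (zvar r w ^ n) \<in> JA r" for n
  proof (induct n)
    case 0 then show ?case by (simp add: JA_0)
  next
    case (Suc n)
    have "dd (zvar r w ^ Suc n) = zvar r w ^ n * dd (zvar r w) + zvar r w * dd (zvar r w ^ n)"
      by (simp add: dd_mult mult.commute)
    then show ?case using Suc PA_pow[OF zw, of n] zw dzw
      by (auto intro!: JA_add JA_mult)
  qed
  have IH: "dd (\<Prod>v\<in>V. zvar r v ^ e v) \<in> JA r" "(\<Prod>v\<in>V. zvar r v ^ e v) \<in> PA r"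
    using insert by auto
  have "dd (\<Prod>v\<in>insert w V. zvar r v ^ e v) = (\<Prod>v\<in>V. zvar r v ^ e v) * dd (zvar r w ^ e w) + zvar r w ^ e w * dd (\<Prod>v\<in>V. zvar r v ^ e v)"
    using insert by (simp add: dd_mult mult.commute)
  then show ?case
    using insert IH dw[of "e w"] PA_pow[OF zw, of "e w"] by (auto intro!: JA_add JA_mult PA_mult)
qed

lemma dd_PA: "x \<in> PA r \<Longrightarrow> dd x \<in> JA r"
proof -
  assume "x \<in> PA r"
  then obtain P where P: "P \<in> Pset r" "x = peval (zvar r) P" by (auto simp: PA_def)
  have "dd x = (\<Sum>mo\<in>Poly_Mapping.keys P. cst (Poly_Mapping.lookup P mo) * dd (mprod (zvar r) mo))"
    unfolding P peval_alt by (simp add: dd_sum dd_cst_mult)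
  also have "\<dots> \<in> JA r"
  proof (rule JA_sum)
    fix mo assume mo: "mo \<in> Poly_Mapping.keys P"
    have "dd (mprod (zvar r) mo) \<in> JA r"
      unfolding mprod_def by (rule conjunct1[OF mprod_dd]) (use P mo in \<open>auto simp: Pset_def\<close>)
    then show "cst (Poly_Mapping.lookup P mo) * dd (mprod (zvar r) mo) \<in> JA r"
      by (intro JA_mult PA_cst)
  qed
  finally show ?thesis .
qed

lemma PA_sum: "(\<And>x. x \<in> A \<Longrightarrow> f x \<in> PA r) \<Longrightarrow> sum f A \<in> PA r"
  using PA_cst[of 0 r] by (induct A rule: infinite_finite_induct) (auto intro: PA_add)

lemma PA_dd: "x \<in> PA r \<Longrightarrow> dd x \<in> PA r"
  using dd_PA JA_PA by blast

lemma PA_ddpow: "x \<in> PA r \<Longrightarrow> (dd ^^ k) x \<in> PA r"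
  by (induct k) (auto intro: PA_dd)

lemma var_ddpow: "(dd ^^ k) (var (i, 0)) = var (i, k)"
  by (induct k) (simp_all add: dd_var)

lemma zvar0: "zvar r (m, 0) = zz r m" by (simp add: zvar_def)

lemma Sg_PA_step:
  assumes r: "r \<ge> 2"
  shows "d \<le> r - 1 \<Longrightarrow> Sg r (r - 1 - d) \<subseteq> PA r"
proof (induct d)
  case 0
  show ?case
  proof
    fix x assume "x \<in> Sg r (r - 1 - 0)"
    then show "x \<in> PA r"
    proof (induct x rule: Sg.induct)
      case (Sg_cst c) then show ?case by (rule PA_cst)
    next
      case (Sg_var i k) then have False using r by arith
      then show ?case ..
    next
      case (Sg_add a b) then show ?case by (blast intro: PA_add)
    next
      case (Sg_mult a b) then show ?case by (blast intro: PA_mult)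
    qed
  qed
next
  case (Suc d)
  have dle: "d \<le> r - 1" using Suc.prems by arith
  have IH: "Sg r (r - 1 - d) \<subseteq> PA r" using Suc.hyps[OF dle] .
  define p where "p = r - 2 - d"
  have pd: "p + 1 = r - 1 - d" "p \<le> r - 2" "d \<le> r - 2" using Suc.prems r unfolding p_def by arith+
  have tri: "ResQ r (d + 1) - cst (of_nat (d + 1) / of_nat r) * Qop r (int r - 1 - int (d + 1)) \<in> Sg r (r - (d + 1))"
    by (rule ResQ_tri[OF r]) simp
  have d2: "d + 2 \<le> r" using pd(3) r by arith
  have e: "int r - 1 - int (d + 1) = int p" unfolding p_def using d2 by (simp add: of_nat_diff)
  have Qp: "Qop r (int r - 1 - int (d + 1)) = var (p, 0)"
    unfolding e using pd r by (auto simp: Qop_def)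
  have sPA: "ResQ r (d + 1) - cst (of_nat (d + 1) / of_nat r) * var (p, 0) \<in> PA r"
  proof -
    have "r - (d + 1) = r - 1 - d" by simp
    then have "ResQ r (d + 1) - cst (of_nat (d + 1) / of_nat r) * var (p, 0) \<in> Sg r (r - 1 - d)"
      using tri unfolding Qp by simp
    then show ?thesis using IH by blast
  qed
  have zPA: "zz r d \<in> PA r" using PA_z[OF pd(3), of 0] by (simp add: zvar0)
  have nz: "(of_nat r::complex) \<noteq> 0" "(of_nat (d+1)::complex) \<noteq> 0" using r by (simp, simp only: of_nat_eq_0_iff)
  have c2: "(of_nat r / of_nat (d+1)) * (of_nat (d+1) / of_nat r) = (1::complex)"
    using nz by simp
  have c1: "(- of_nat (d+1) / of_nat r) * (- of_nat r / of_nat (d+1)) = (1::complex)"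
    by (simp only: minus_divide_left[symmetric] minus_mult_minus mult.commute[of "of_nat (d+1) / of_nat r"] c2)
  have eq1: "cst (- of_nat (d + 1) / of_nat r) * zz r d = ResQ r (d + 1)"
    unfolding zz_def mult.assoc[symmetric] cst_mult[symmetric] c1 by simp
  have "cst (- of_nat (d + 1) / of_nat r) * zz r d \<in> PA r" by (intro PA_mult PA_cst zPA)
  then have ResPA: "ResQ r (d + 1) \<in> PA r" unfolding eq1 .
  have eq2: "var (p, 0) = cst (of_nat r / of_nat (d + 1)) * (ResQ r (d + 1) - (ResQ r (d + 1) - cst (of_nat (d + 1) / of_nat r) * var (p, 0)))"
  proof -
    have "ResQ r (d + 1) - (ResQ r (d + 1) - cst (of_nat (d + 1) / of_nat r) * var (p, 0)) = cst (of_nat (d + 1) / of_nat r) * var (p, 0)"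
      by simp
    then show ?thesis by (simp only: mult.assoc[symmetric] cst_mult[symmetric] c2 cst_1 mult_1)
  qed
  have vp: "var (p, 0) \<in> PA r"
    by (subst eq2) (intro PA_mult PA_cst PA_diff ResPA sPA)
  show ?case
  proof
    fix x assume "x \<in> Sg r (r - 1 - Suc d)"
    then show "x \<in> PA r"
    proof (induct x rule: Sg.induct)
      case (Sg_var i k)
      show ?case
      proof (cases "i = p")
        case True
        then show ?thesis using PA_ddpow[OF vp, of k] by (simp add: var_ddpow)
      next
        case False
        have "r - 1 - d \<le> i" using Sg_var.hyps False unfolding p_def by arith
        then have "var (i, k) \<in> Sg r (r - 1 - d)" using Sg_var.hyps by (intro Sg.Sg_var) simp_all
        then show ?thesis using IH by auto
      qed
    next
      case (Sg_cst c) then show ?case by (rule PA_cst)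
    next
      case (Sg_add a b) then show ?case by (blast intro: PA_add)
    next
      case (Sg_mult a b) then show ?case by (blast intro: PA_mult)
    qed
  qed
qed

lemma Sg0_PA: "r \<ge> 2 \<Longrightarrow> Sg r 0 \<subseteq> PA r"
  using Sg_PA_step[of r "r - 1"] by simp


unbundle fps_syntax

section \<open>Commutative residue identity\<close>

lemma fls_mult_nth_lb:
  fixes f g :: "'a::comm_ring_1 fls"
  assumes fa: "\<And>i. i < a \<Longrightarrow> f $$ i = 0" and gb: "\<And>i. i < b \<Longrightarrow> g $$ i = 0"
  shows "(f * g) $$ n = (\<Sum>i\<in>{a..n-b}. f $$ i * g $$ (n - i))"
proof (cases "f = 0 \<or> g = 0")
  case True then show ?thesis by auto
next
  case False
  then have f0: "f \<noteq> 0" and g0: "g \<noteq> 0" by auto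
  have da: "a \<le> fls_subdegree f" by (rule fls_subdegree_geI[OF f0 fa])
  have db: "b \<le> fls_subdegree g" by (rule fls_subdegree_geI[OF g0 gb])
  have "(f * g) $$ n = (\<Sum>i\<in>{fls_subdegree f..n - fls_subdegree g}. f $$ i * g $$ (n - i))"
    by (rule fls_times_nth(2))
  also have "\<dots> = (\<Sum>i\<in>{a..n-b}. f $$ i * g $$ (n - i))"
  proof (rule sum.mono_neutral_left)
    show "finite {a..n - b}" by simp
    show "{fls_subdegree f..n - fls_subdegree g} \<subseteq> {a..n - b}" using da db by auto
    show "\<forall>i\<in>{a..n - b} - {fls_subdegree f..n - fls_subdegree g}. f $$ i * g $$ (n - i) = 0"
    proof
      fix i assume "i \<in> {a..n - b} - {fls_subdegree f..n - fls_subdegree g}"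
      then have "i < fls_subdegree f \<or> n - i < fls_subdegree g" by auto
      then show "f $$ i * g $$ (n - i) = 0" by auto
    qed
  qed
  finally show ?thesis .
qed

lemma fls_mult_nth_lb':
  fixes f g :: "'a::comm_ring_1 fls"
  assumes "\<And>i. i < a \<Longrightarrow> f $$ i = 0" and "\<And>i. i < b \<Longrightarrow> g $$ i = 0" and "c = n - b"
  shows "(f * g) $$ n = (\<Sum>i\<in>{a..c}. f $$ i * g $$ (n - i))"
  using fls_mult_nth_lb[OF assms(1,2)] assms(3) by simp

type_synonym dls = "dpoly fls"

definition Dv :: dls where "Dv = fls_X_inv"
definition dD :: "dls \<Rightarrow> dls" where "dD f = - (fls_X ^ 2 * fls_deriv f)"
definition ResD :: "dls \<Rightarrow> dpoly" where "ResD f = f $$ 1"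

lemma Xsq_nth: "(fls_X ^ 2 * g) $$ n = g $$ (n - 2)"
  by (simp add: fls_X_power_times_conv_shift)

lemma Dv_nth: "(Dv * g) $$ n = g $$ (n + 1)"
  by (simp add: Dv_def fls_X_inv_times_conv_shift)

lemma dD_nth: "dD f $$ n = - (of_int (n - 1) * f $$ (n - 1))"
  by (simp add: dD_def Xsq_nth)

lemma dD_mult: "dD (f * g) = dD f * g + f * dD g"
  by (simp add: dD_def algebra_simps)

lemma dD_add: "dD (f + g) = dD f + dD g"
  by (simp add: dD_def algebra_simps)

lemma dD_Dv: "dD Dv = 1"
  by (rule fls_eqI) (auto simp: dD_nth Dv_def)

lemma ResD_dD: "ResD (dD f) = 0"
  by (simp add: ResD_def dD_nth)

lemma ResD_add: "ResD (f + g) = ResD f + ResD g" by (simp add: ResD_def)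
lemma ResD_sum: "ResD (sum f A) = (\<Sum>a\<in>A. ResD (f a))" by (simp add: ResD_def fls_nth_sum)
lemma ResD_const: "ResD (fls_const c * f) = c * ResD f" by (simp add: ResD_def)
lemma ResD_of_nat: "ResD (of_nat n * f) = of_nat n * ResD f"
proof -
  have "(of_nat n :: dls) = fls_const (of_nat n)" by (simp add: fls_of_nat)
  then show ?thesis by (simp add: ResD_const)
qed

lemma dD_power: "dD (f ^ Suc j) = of_nat (Suc j) * f ^ j * dD f"
  using fls_deriv_power[of f "Suc j"] by (simp add: dD_def algebra_simps)

definition lhyp :: "dls \<Rightarrow> bool" where
  "lhyp l \<longleftrightarrow> l $$ (-1) = 1 \<and> l $$ 0 = 0 \<and> (\<forall>n < -1. l $$ n = 0)"

lemma dD_l_nth: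
  assumes "lhyp l"
  shows "dD l $$ 0 = 1" "dD l $$ 1 = 0" "\<And>n. n < 0 \<Longrightarrow> dD l $$ n = 0"
  using assms by (auto simp: dD_nth lhyp_def)

lemma ResD_pow_dD:
  assumes "lhyp l"
  shows "ResD (l ^ j * dD l) = 0"
proof -
  have "0 = ResD (dD (l ^ Suc j))" by (simp add: ResD_dD)
  also have "\<dots> = of_nat (Suc j) * ResD (l ^ j * dD l)"
    by (simp only: dD_power ResD_of_nat mult.assoc)
  finally have "of_nat (Suc j) * ResD (l ^ j * dD l) = of_nat (Suc j) * 0" by simp
  then show ?thesis by (rule of_nat_cancel_dpoly[rotated]) simp
qed

primrec gs :: "dls \<Rightarrow> nat \<Rightarrow> dls" where
  "gs l 0 = Dv - l"
| "gs l (Suc N) = l * gs l N - fls_const (gs l N $$ 1)"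

definition ds :: "dls \<Rightarrow> nat \<Rightarrow> dpoly" where
  "ds l N = gs l N $$ 1"

lemma l_low: "lhyp l \<Longrightarrow> i < -1 \<Longrightarrow> l $$ i = 0"
  by (simp add: lhyp_def)

lemma gs_low:
  assumes "lhyp l"
  shows "n \<le> 0 \<Longrightarrow> gs l N $$ n = 0"
proof (induct N arbitrary: n)
  case 0 then show ?case using assms by (cases "n = 0") (auto simp: lhyp_def Dv_def)
next
  case (Suc N)
  have "(l * gs l N) $$ n = (\<Sum>i\<in>{-1..n-1}. l $$ i * gs l N $$ (n - i))"
    by (rule fls_mult_nth_lb'[where a="-1" and b=1]) (use assms Suc in \<open>auto simp: lhyp_def\<close>)
  also have "\<dots> = (if n = 0 then gs l N $$ 1 else 0)"
  proof (cases "n = 0")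
    case True then show ?thesis using assms by (simp add: lhyp_def)
  next
    case False then have "n - 1 < -1" using Suc by simp
    then show ?thesis using False by simp
  qed
  finally show ?case by simp
qed

lemma gs_2:
  assumes "lhyp l"
  shows "ds l (Suc N) = gs l N $$ 2"
proof -
  have "(l * gs l N) $$ 1 = (\<Sum>i\<in>{-1..0}. l $$ i * gs l N $$ (1 - i))"
    by (rule fls_mult_nth_lb'[where a="-1" and b=1]) (use assms gs_low[OF assms] in \<open>auto simp: lhyp_def\<close>)
  also have "\<dots> = gs l N $$ 2"
  proof -
    have "{-1..0::int} = {-1, 0}" by auto
    then show ?thesis using assms by (simp add: lhyp_def)
  qed
  finally show ?thesis by (simp add: ds_def)
qed

lemma gs_expand:
  "Dv * l ^ N = l ^ Suc N + (\<Sum>m<N. fls_const (ds l m) * l ^ (N - 1 - m)) + gs l N"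
proof (induct N)
  case 0 then show ?case by simp
next
  case (Suc N)
  have "Dv * l ^ Suc N = l * (Dv * l ^ N)" by (simp add: algebra_simps)
  also have "\<dots> = l ^ Suc (Suc N) + (\<Sum>m<N. fls_const (ds l m) * l ^ (Suc N - 1 - m)) + l * gs l N"
  proof -
    have "l * (\<Sum>m<N. fls_const (ds l m) * l ^ (N - 1 - m)) = (\<Sum>m<N. fls_const (ds l m) * l ^ (Suc N - 1 - m))"
      unfolding sum_distrib_left
    proof (rule sum.cong[OF refl])
      fix m assume "m \<in> {..<N}"
      then have "Suc N - 1 - m = Suc (N - 1 - m)" by auto
      then show "l * (fls_const (ds l m) * l ^ (N - 1 - m)) = fls_const (ds l m) * l ^ (Suc N - 1 - m)"
        by (simp add: mult.left_commute)
    qed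
    then show ?thesis unfolding Suc by (simp add: distrib_left del: power_Suc) (simp add: mult.assoc)
  qed
  also have "\<dots> = l ^ Suc (Suc N) + (\<Sum>m<Suc N. fls_const (ds l m) * l ^ (Suc N - 1 - m)) + gs l (Suc N)"
    by (simp add: ds_def del: power_Suc)
  finally show ?case .
qed

lemma ResD_g_dD:
  assumes "lhyp l" shows "ResD (gs l N * dD l) = ds l N"
proof -
  have "(gs l N * dD l) $$ 1 = (\<Sum>i\<in>{1..1}. gs l N $$ i * dD l $$ (1 - i))"
    by (rule fls_mult_nth_lb'[where a=1 and b=0]) (use gs_low[OF assms] dD_l_nth[OF assms] in auto)
  then show ?thesis using dD_l_nth[OF assms] by (simp add: ResD_def ds_def)
qed

lemma ResD_Dvg_dD:
  assumes "lhyp l" shows "ResD (Dv * gs l N * dD l) = ds l (Suc N)"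
proof -
  have "(gs l N * dD l) $$ 2 = (\<Sum>i\<in>{1..2}. gs l N $$ i * dD l $$ (2 - i))"
    by (rule fls_mult_nth_lb'[where a=1 and b=0]) (use gs_low[OF assms] dD_l_nth[OF assms] in auto)
  also have "\<dots> = gs l N $$ 2"
  proof -
    have "{1..2::int} = {1, 2}" by auto
    then show ?thesis using dD_l_nth[OF assms] by simp
  qed
  finally show ?thesis using gs_2[OF assms] by (simp add: ResD_def Dv_nth mult.assoc)
qed

lemma ResD_key:
  assumes "lhyp l" shows "ResD (Dv * l ^ N * dD l) = ds l N"
proof -
  have "Dv * l ^ N * dD l = (l ^ Suc N + (\<Sum>m<N. fls_const (ds l m) * l ^ (N - 1 - m)) + gs l N) * dD l"
    by (simp only: gs_expand)
  also have "\<dots> = l ^ Suc N * dD l + (\<Sum>m<N. fls_const (ds l m) * (l ^ (N - 1 - m) * dD l)) + gs l N * dD l"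
    by (simp only: distrib_right sum_distrib_right mult.assoc)
  finally show ?thesis
    by (simp add: ResD_add ResD_sum ResD_const ResD_pow_dD[OF assms] ResD_g_dD[OF assms] del: power_Suc)
qed

lemma ResD_pow:
  assumes "lhyp l" and k: "k \<ge> 1"
  shows "ResD (l ^ k) = - (of_nat k * ds l (k - 1))"
proof -
  obtain j where kj: "k = Suc j" using k by (cases k) auto
  have e: "dD (Dv * l ^ k) = l ^ k + of_nat k * (Dv * l ^ j * dD l)"
    unfolding dD_mult dD_Dv kj dD_power by (simp add: algebra_simps del: power_Suc)
  have "0 = ResD (dD (Dv * l ^ k))" by (simp add: ResD_dD)
  also have "\<dots> = ResD (l ^ k) + of_nat k * ResD (Dv * l ^ j * dD l)"
    unfolding e ResD_add ResD_of_nat ..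
  finally show ?thesis using ResD_key[OF assms(1), of j] kj by (simp add: eq_neg_iff_add_eq_0 del: power_Suc)
qed

lemma quad_identity:
  assumes l: "lhyp l" and r: "r \<ge> 2" and q: "\<And>n. n > 0 \<Longrightarrow> (l ^ r) $$ n = 0"
  shows "2 * ds l r + (\<Sum>m<r-1. ds l m * ds l (r - 2 - m)) = 0"
proof -
  obtain s where rs: "r = Suc s" using r by (cases r) auto
  have e1: "Dv * (Dv * dD (l ^ r)) = of_nat r * (Dv * Dv * l ^ s * dD l)"
    unfolding rs dD_power by (simp add: algebra_simps del: power_Suc)
  have z: "ResD (Dv * (Dv * dD (l ^ r))) = 0"
    by (simp add: ResD_def Dv_nth dD_nth q del: power_Suc)
  have A: "of_nat r * ResD (Dv * Dv * l ^ s * dD l) = 0"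
    using z unfolding e1 ResD_of_nat .
  have "Dv * Dv * l ^ s * dD l = Dv * (Dv * l ^ s) * dD l" by (simp only: mult.assoc)
  also have "\<dots> = Dv * (l ^ Suc s + (\<Sum>m<s. fls_const (ds l m) * l ^ (s - 1 - m)) + gs l s) * dD l"
    by (simp only: gs_expand)
  also have "\<dots> = Dv * l ^ Suc s * dD l + (\<Sum>m<s. fls_const (ds l m) * (Dv * l ^ (s - 1 - m) * dD l)) + Dv * gs l s * dD l"
    by (simp only: distrib_left distrib_right sum_distrib_left sum_distrib_right mult.assoc mult.left_commute[of Dv])
  finally have e2: "Dv * Dv * l ^ s * dD l = Dv * l ^ Suc s * dD l + (\<Sum>m<s. fls_const (ds l m) * (Dv * l ^ (s - 1 - m) * dD l)) + Dv * gs l s * dD l" .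
  have B: "ResD (Dv * Dv * l ^ s * dD l) = ds l (Suc s) + (\<Sum>m<s. ds l m * ds l (s - 1 - m)) + ds l (Suc s)"
    unfolding e2 ResD_add ResD_sum ResD_const ResD_key[OF l] ResD_Dvg_dD[OF l] ..
  have "of_nat r * (2 * ds l r + (\<Sum>m<r-1. ds l m * ds l (r - 2 - m))) = of_nat r * 0"
    using A unfolding B rs by (simp add: algebra_simps)
  then show ?thesis by (rule of_nat_cancel_dpoly[rotated]) (use r in simp)
qed


unbundle fps_syntax

section \<open>Projection killing derivatives\<close>

definition piv :: "nat \<times> nat \<Rightarrow> dpoly" where
  "piv v = (if snd v = 0 then var v else 0)"

definition pj :: "dpoly \<Rightarrow> dpoly" where
  "pj p = peval piv p"

lemma pj_add: "pj (a + b) = pj a + pj b" by (simp add: pj_def peval_add)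
lemma pj_mult: "pj (a * b) = pj a * pj b" by (simp add: pj_def peval_mult)
lemma pj_diff: "pj (a - b) = pj a - pj b" by (simp add: pj_def peval_diff)
lemma pj_uminus: "pj (- a) = - pj a" by (simp add: pj_def peval_uminus)
lemma pj_cst[simp]: "pj (cst c) = cst c" by (simp add: pj_def)
lemma pj_0[simp]: "pj 0 = 0" by (simp add: pj_def)
lemma pj_1[simp]: "pj 1 = 1" by (simp add: pj_def)
lemma pj_sum: "pj (sum f A) = (\<Sum>a\<in>A. pj (f a))" by (simp add: pj_def peval_sum)
lemma pj_var: "pj (var v) = piv v" by (simp add: pj_def)

lemma pj_dd_Sg: "x \<in> Sg r p \<Longrightarrow> pj (dd x) = 0"
  by (induct x rule: Sg.induct) (simp_all add: dd_add dd_mult dd_var pj_add pj_mult pj_var piv_def)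

lemma pj_Dapp: "x \<in> Sg r p \<Longrightarrow> j > 0 \<Longrightarrow> pj (Dapp r' j x) = 0"
proof -
  assume x: "x \<in> Sg r p" and j: "j > 0"
  obtain j' where jj: "j = Suc j'" using j by (cases j) auto
  have "(dd ^^ j) x = dd ((dd ^^ j') x)" by (simp add: jj)
  moreover have "pj (dd ((dd ^^ j') x)) = 0" by (rule pj_dd_Sg[OF Sg_ddpow[OF x]])
  ultimately show ?thesis by (simp add: Dapp_def pj_mult)
qed

lemma pj_Sg0: "x \<in> Sg r 0 \<Longrightarrow> pj x \<in> Sg r 0"
  by (induct x rule: Sg.induct) (auto simp: pj_add pj_mult pj_var piv_def intro: Sg.intros)

section \<open>From operators to Laurent series\<close>

definition Fl :: "psdo \<Rightarrow> dls" where
  "Fl A = Abs_fls (\<lambda>n. pj (A (- n)))"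

lemma Fl_nth: assumes "bnd A a" shows "Fl A $$ n = pj (A (- n))"
proof -
  have "\<forall>\<^sub>\<infinity>m::nat. pj (A (- (- int m))) = 0"
    unfolding MOST_nat using assms by (intro exI[of _ "nat a"]) (auto simp: bnd_def)
  then show ?thesis unfolding Fl_def by simp
qed

lemma Fl_pmul:
  assumes A: "bnd A a" and B: "bnd B b" and cB: "coefin B (Sg r 0)"
  shows "Fl (pmul r' A B) = Fl A * Fl B"
proof (rule fls_eqI)
  fix n
  have bAB: "bnd (pmul r' A B) (a + b)" by (rule bnd_pmul[OF A B])
  have inner: "(\<Sum>k\<in>{- n - i..b}. pj (cst ((of_int i :: complex) gchoose nat (i + k + n)) * A i * Dapp r' (nat (i + k + n)) (B k)))
      = pj (A i) * pj (B (- n - i))" if i: "i \<in> {- n - b..a}" for i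
  proof -
    have "(\<Sum>k\<in>{- n - i..b}. pj (cst ((of_int i :: complex) gchoose nat (i + k + n)) * A i * Dapp r' (nat (i + k + n)) (B k)))
       = (\<Sum>k\<in>{- n - i..b}. cst ((of_int i :: complex) gchoose nat (i + k + n)) * pj (A i) * pj (Dapp r' (nat (i + k + n)) (B k)))"
      by (simp add: pj_mult)
    also have "\<dots> = cst ((of_int i :: complex) gchoose nat (i + (- n - i) + n)) * pj (A i) * pj (Dapp r' (nat (i + (- n - i) + n)) (B (- n - i)))
       + (\<Sum>k\<in>{- n - i + 1..b}. cst ((of_int i :: complex) gchoose nat (i + k + n)) * pj (A i) * pj (Dapp r' (nat (i + k + n)) (B k)))"
      by (rule sum_int_first) (use i in auto)
    also have "(\<Sum>k\<in>{- n - i + 1..b}. cst ((of_int i :: complex) gchoose nat (i + k + n)) * pj (A i) * pj (Dapp r' (nat (i + k + n)) (B k))) = 0"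
    proof (rule sum.neutral, rule ballI)
      fix k assume "k \<in> {- n - i + 1..b}"
      then have "nat (i + k + n) > 0" by auto
      then show "cst ((of_int i :: complex) gchoose nat (i + k + n)) * pj (A i) * pj (Dapp r' (nat (i + k + n)) (B k)) = 0"
        using pj_Dapp[of "B k" r 0 "nat (i + k + n)" r'] cB by (simp add: coefin_def)
    qed
    finally show ?thesis by simp
  qed
  have "Fl (pmul r' A B) $$ n = pj (pmul r' A B (- n))" by (rule Fl_nth[OF bAB])
  also have "\<dots> = (\<Sum>i\<in>{- n - b..a}. pj (A i) * pj (B (- n - i)))"
    unfolding pmul_fin[OF A B] pj_sum using inner by (intro sum.cong) auto
  also have "\<dots> = (\<Sum>i\<in>uminus ` {- a..n + b}. pj (A i) * pj (B (- n - i)))"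
    by simp
  also have "\<dots> = (\<Sum>i\<in>{- a..n + b}. pj (A (- i)) * pj (B (i - n)))"
    by (subst sum.reindex) (auto simp: inj_on_def)
  also have "\<dots> = (\<Sum>i\<in>{- a..n + b}. Fl A $$ i * Fl B $$ (n - i))"
    by (simp add: Fl_nth[OF A] Fl_nth[OF B])
  also have "\<dots> = (Fl A * Fl B) $$ n"
    by (rule fls_mult_nth_lb'[where a="- a" and b="- b", symmetric]) (use A B in \<open>auto simp: Fl_nth bnd_def\<close>)
  finally show "Fl (pmul r' A B) $$ n = (Fl A * Fl B) $$ n" .
qed

lemma Fl_pone: "Fl pone = 1"
  by (rule fls_eqI) (simp add: Fl_nth[OF bnd_pone], simp add: pone_def)

lemma Fl_ppow:
  assumes "bnd L 1" "coefin L (Sg r 0)"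
  shows "Fl (ppow r' L k) = Fl L ^ k"
proof (induct k)
  case 0 then show ?case by (simp add: Fl_pone)
next
  case (Suc k)
  then show ?case using Fl_pmul[OF bnd_ppow[OF assms(1)] assms(1) assms(2)]
    by (simp add: mult.commute)
qed


unbundle fps_syntax

lemma decomp:
  assumes r: "r \<ge> 2"
  shows "x \<in> Sg r 0 \<Longrightarrow> x - pj x \<in> JA r"
proof (induct x rule: Sg.induct)
  case (Sg_cst c) then show ?case by (simp add: JA_0)
next
  case (Sg_var i k)
  show ?case
  proof (cases k)
    case 0 then show ?thesis by (simp add: pj_var piv_def JA_0)
  next
    case (Suc k')
    have "var (i, k') \<in> Sg r 0" using Sg_var by (intro Sg.Sg_var) auto
    then have "var (i, k') \<in> PA r" using Sg0_PA[OF r] by auto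
    then have "dd (var (i, k')) \<in> JA r" by (rule dd_PA)
    then show ?thesis using Suc by (simp add: dd_var pj_var piv_def)
  qed
next
  case (Sg_add a b)
  have "a + b - pj (a + b) = (a - pj a) + (b - pj b)" by (simp add: pj_add)
  then show ?case using Sg_add by (simp only:) (intro JA_add, auto)
next
  case (Sg_mult a b)
  have e: "a * b - pj (a * b) = b * (a - pj a) + pj a * (b - pj b)" by (simp add: pj_mult algebra_simps)
  have "b \<in> PA r" "pj a \<in> PA r" using Sg_mult Sg0_PA[OF r] pj_Sg0 by auto
  then show ?case unfolding e using Sg_mult by (intro JA_add JA_mult) auto
qed

definition ell :: "nat \<Rightarrow> dls" where "ell r = Fl (Qroot r)"

lemma ell_nth: "r \<ge> 2 \<Longrightarrow> ell r $$ n = pj (Qroot r (- n))"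
  unfolding ell_def by (rule Fl_nth[OF Qroot_basic(1)])

lemma ell_pow: "r \<ge> 2 \<Longrightarrow> ell r ^ k = Fl (ppow r (Qroot r) k)"
  unfolding ell_def by (rule Fl_ppow[OF Qroot_basic(1) Qroot_Sg0, symmetric])

lemma ell_hyp: "r \<ge> 2 \<Longrightarrow> lhyp (ell r)"
  using Qroot_basic[of r] by (auto simp: lhyp_def ell_nth bnd_def)

lemma ell_q:
  assumes r: "r \<ge> 2" and n: "n > 0" shows "(ell r ^ r) $$ n = 0"
proof -
  have "(ell r ^ r) $$ n = pj (ppow r (Qroot r) r (- n))"
    by (simp only: ell_pow[OF r] Fl_nth[OF bnd_ppow[OF Qroot_basic(1)[OF r]]])
  also have "\<dots> = pj (Qop r (- n))" by (simp only: Qroot_basic(4)[OF r])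
  also have "\<dots> = 0" using n r by (simp add: Qop_def)
  finally show ?thesis .
qed

lemma pj_ResQ:
  assumes r: "r \<ge> 2" and k: "k \<ge> 1"
  shows "pj (ResQ r k) = - (of_nat k * ds (ell r) (k - 1))"
proof -
  have "pj (ResQ r k) = (ell r ^ k) $$ 1"
    by (simp add: ell_pow[OF r] Fl_nth[OF bnd_ppow[OF Qroot_basic(1)[OF r]]] ResQ_def)
  also have "\<dots> = - (of_nat k * ds (ell r) (k - 1))"
    using ResD_pow[OF ell_hyp[OF r] k] by (simp add: ResD_def)
  finally show ?thesis .
qed

lemma cst_numeral: "cst (numeral n) = numeral n"
  by (simp add: cst_def)

lemma pj_zz:
  assumes r: "r \<ge> 2"
  shows "pj (zz r m) = of_nat r * ds (ell r) m"
proof -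
  have nz: "(of_nat (m + 1) :: complex) \<noteq> 0" by (simp only: of_nat_eq_0_iff)
  have c: "(- of_nat r / of_nat (m + 1)) * of_nat (m + 1) = (- of_nat r :: complex)"
    using nz by simp
  have "pj (zz r m) = cst (- of_nat r / of_nat (m + 1)) * (- (of_nat (m + 1) * ds (ell r) m))"
    by (simp add: zz_def pj_mult pj_ResQ[OF r])
  also have "\<dots> = - (cst ((- of_nat r / of_nat (m + 1)) * of_nat (m + 1)) * ds (ell r) m)"
    by (simp only: cst_mult cst_of_nat[symmetric] mult.assoc mult_minus_right)
  also have "\<dots> = of_nat r * ds (ell r) m"
    unfolding c by (simp add: cst_minus cst_of_nat)
  finally show ?thesis .
qed

lemma pj_target:
  assumes r: "r \<ge> 2"
  shows "pj (cst (of_nat r ^ 2 / of_nat (r + 1)) * ResQ r (r + 1)) = - (of_nat r ^ 2 * ds (ell r) r)"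
proof -
  have c: "(of_nat r ^ 2 / of_nat (r + 1)) * of_nat (r + 1) = (of_nat r ^ 2 :: complex)"
  proof -
    have "(of_nat (r + 1) :: complex) \<noteq> 0" by (simp only: of_nat_eq_0_iff)
    then show ?thesis by simp
  qed
  have "pj (cst (of_nat r ^ 2 / of_nat (r + 1)) * ResQ r (r + 1)) = cst (of_nat r ^ 2 / of_nat (r + 1)) * (- (of_nat (r + 1) * ds (ell r) r))"
    by (simp add: pj_mult pj_ResQ[OF r])
  also have "\<dots> = - (cst ((of_nat r ^ 2 / of_nat (r + 1)) * of_nat (r + 1)) * ds (ell r) r)"
    by (simp only: cst_mult cst_of_nat[symmetric] mult.assoc mult_minus_right)
  also have "\<dots> = - (of_nat r ^ 2 * ds (ell r) r)"
    unfolding c by (simp add: cst_power cst_of_nat)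
  finally show ?thesis .
qed

lemma pj_E:
  assumes r: "r \<ge> 2"
  shows "pj (cst (of_nat r ^ 2 / of_nat (r + 1)) * ResQ r (r + 1)
            - cst (1/2) * (\<Sum>j=0..r-2. zz r j * zz r (r - 2 - j))) = 0"
proof -
  define d where "d = ds (ell r)"
  have Q: "2 * d r + (\<Sum>m<r-1. d m * d (r - 2 - m)) = 0"
    unfolding d_def by (rule quad_identity[OF ell_hyp[OF r] r ell_q[OF r]])
  have rng: "{0..r-2} = {..<r-1}" using r by auto
  have S: "(\<Sum>j=0..r-2. pj (zz r j) * pj (zz r (r - 2 - j))) = of_nat r ^ 2 * (\<Sum>m<r-1. d m * d (r - 2 - m))"
    unfolding rng pj_zz[OF r] d_def[symmetric] sum_distrib_left by (rule sum.cong) (simp_all add: power2_eq_square mult_ac)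
  have h: "cst (1/2) * (2 :: dpoly) = 1"
    by (simp only: cst_numeral[symmetric] cst_mult[symmetric]) simp
  have S2: "(\<Sum>m<r-1. d m * d (r - 2 - m)) = - (2 * d r)" using Q by (simp add: eq_neg_iff_add_eq_0 add.commute)
  have "pj (cst (of_nat r ^ 2 / of_nat (r + 1)) * ResQ r (r + 1)
            - cst (1/2) * (\<Sum>j=0..r-2. zz r j * zz r (r - 2 - j)))
      = pj (cst (of_nat r ^ 2 / of_nat (r + 1)) * ResQ r (r + 1)) - cst (1/2) * (\<Sum>j=0..r-2. pj (zz r j) * pj (zz r (r - 2 - j)))"
    by (simp only: pj_diff pj_mult pj_cst pj_sum)
  also have "\<dots> = - (of_nat r ^ 2 * d r) - cst (1/2) * (of_nat r ^ 2 * (- (2 * d r)))"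
    unfolding pj_target[OF r, folded d_def] S S2 ..
  also have "\<dots> = - (of_nat r ^ 2 * d r) + (cst (1/2) * 2) * (of_nat r ^ 2 * d r)"
    by (simp add: algebra_simps)
  also have "\<dots> = 0" unfolding h by simp
  finally show ?thesis .
qed

theorem theorem3p5:
  fixes r :: nat
  assumes "r \<ge> 2"
  shows "\<exists>P W :: dpoly.
     (\<forall>mo\<in>Poly_Mapping.keys P. \<forall>v\<in>Poly_Mapping.keys mo. fst v \<le> r - 2)
   \<and> peval (zvar r) P = cst (of_nat r ^ 2 / of_nat (r + 1)) * ResQ r (r + 1)
   \<and> P = cst (1/2) * (\<Sum>j=0..r-2. var (j, 0) * var (r - 2 - j, 0)) + W
   \<and> (\<forall>mo\<in>Poly_Mapping.keys W. \<exists>v\<in>Poly_Mapping.keys mo. 1 \<le> snd v)"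
proof -
  note r = assms
  define T where "T = cst (of_nat r ^ 2 / of_nat (r + 1)) * ResQ r (r + 1)"
  define Z where "Z = cst (1/2) * (\<Sum>j=0..r-2. zz r j * zz r (r - 2 - j))"
  define E where "E = T - Z"
  have zzS: "zz r j \<in> Sg r 0" for j
    unfolding zz_def by (intro Sg_cst_mult ResQ_Sg0[OF r])
  have ES: "E \<in> Sg r 0"
    unfolding E_def T_def Z_def by (intro Sg_diff Sg_cst_mult ResQ_Sg0[OF r] Sg_sum Sg_mult zzS)
  have "pj E = 0" unfolding E_def T_def Z_def by (rule pj_E[OF r])
  then have "E \<in> JA r" using decomp[OF r ES] by simp
  then obtain W where W: "W \<in> Jw r" "E = peval (zvar r) W" by (auto simp: JA_def)
  define P where "P = cst (1/2) * (\<Sum>j=0..r-2. var (j, 0) * var (r - 2 - j, 0)) + W"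
  have "P \<in> Pset r"
    unfolding P_def using W(1)
    by (intro Pset_add Pset_mult Pset_cst Pset_sum Pset_var) (auto simp: Jw_def)
  moreover have "peval (zvar r) P = T"
  proof -
    have "peval (zvar r) P = Z + E"
      by (simp add: P_def Z_def peval_add peval_mult peval_sum zvar0 W(2))
    then show ?thesis by (simp add: E_def)
  qed
  ultimately show ?thesis
    using W(1) unfolding T_def Pset_def Jw_def
    by (intro exI[of _ P] exI[of _ W]) (auto simp: P_def)
qed

end
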